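(* Let $k$ be a differential field of characteristic zero with derivations $\Delta=\{\delta_1,\dots,\delta_m\}$, $R=k\{y_1,\ldots,y_l\}$, and fix an orderly ranking. Let $\mathbb{C}=C^1,\dots,C^p$ be a Kolchin characteristic set of a characterizable ideal $[\mathbb{C}]:H_{\mathbb{C}}^\infty$, and let $h$ be an integer at least the maximal order of a derivative appearing in the elements of $\mathbb{C}$. Then, in $R_h=k[\theta y_j:\ \operatorname{ord}\theta\le h]$, $$[\mathbb{C}]:H_{\mathbb{C}}^\infty\cap R_h=\big(\theta C^j:\ 1\le j\le p,\ \theta\in\Theta,\ \operatorname{ord}(\theta u_{C^j})\le h\big):H_{\mathbb{C}}^\infty,$$ where the right-hand side is an ideal of $R_h$. Consequently, if $I=\bigcap_{i=1}^n[\mathbb{C}_i]:H_{\mathbb{C}_i}^\infty$ is a characteristic decomposition w.r.t. the orderly ranking and $h$ bounds the orders of all derivatives appearing in all $\mathbb{C}_i$, then $I\cap R_h=\bigcap_{i=1}^n(\theta C_i^j:\ \operatorname{ord}(\theta u_{C_i^j})\le h):H_{\mathbb{C}_i}^\infty$.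
   Context: $\Theta$ is the free commutative monoid of operators $\theta=\delta_1^{k_1}\cdots\delta_m^{k_m}$, $\operatorname{ord}\theta=\sum k_i$; $R$ is the polynomial ring over $k$ in the derivatives $\theta y_j$, the order of $\theta y_j$ being $\operatorname{ord}\theta$. A ranking is a total order on $\{\theta y_j\}$ with $\theta u\ge u$ and $u\ge v\Rightarrow\theta u\ge\theta v$; orderly if $\operatorname{ord}u>\operatorname{ord}v\Rightarrow u>v$. For $f\notin k$: leader $u_f$ = highest ranked derivative in $f$, initial $I_f$ = leading coefficient in $u_f$, separant $S_f=\partial f/\partial u_f$. $f$ is reduced w.r.t. $g$ if no proper derivative of $u_g$ appears in $f$ and $\deg_{u_g}f<\deg_{u_g}g$. An autoreduced set is a set disjoint from $k$ each of whose elements is reduced w.r.t. the others; elements are listed in increasing rank, autoreduced sets compared lexicographically with a proper extension having lower rank. A (Kolchin) characteristic set of a differential ideal is an autoreduced subset of lowest rank. $H_{\mathbb{A}}$ is the product of all initials and separants of elements of $\mathbb{A}$; $J:S^\infty=\{a:\exists s\in S^\infty, sa\in J\}$ with $S^\infty$ the multiplicative set generated by $S$; $[F]$ is the differential ideal generated by $F$. A radical differential ideal $J$ is characterizable if it has a Kolchin characteristic set $\mathbb{A}$ with $J=[\mathbb{A}]:H_{\mathbb{A}}^\infty$. A characteristic decomposition of a radical differential ideal $I$ is a representation $I=\bigcap_i[\mathbb{C}_i]:H_{\mathbb{C}_i}^\infty$ where each $[\mathbb{C}_i]:H_{\mathbb{C}_i}^\infty$ is characterizable with Kolchin characteristic set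 $\mathbb{C}_i$. *)

theory Defs
  imports Main "HOL-Library.Poly_Mapping"
begin

text \<open>A derivative theta y_j is encoded as a pair (theta, j), where the operator
  theta = delta_1^{k_1} ... delta_m^{k_m} is the finitely supported exponent vector
  (index i < m stands for delta_{i+1}) and j < l stands for y_{j+1}.\<close>

type_synonym dop = "nat \<Rightarrow>\<^sub>0 nat"
type_synonym dvar = "dop \<times> nat"
type_synonym 'k dpoly = "(dvar \<Rightarrow>\<^sub>0 nat) \<Rightarrow>\<^sub>0 'k"

definition diff_field :: "(nat \<Rightarrow> 'k::field_char_0 \<Rightarrow> 'k) \<Rightarrow> nat \<Rightarrow> bool" where
  "diff_field d m \<longleftrightarrow>
     (\<forall>i<m. \<forall>a b. d i (a + b) = d i a + d i b) \<and>
     (\<forall>i<m. \<forall>a b. d i (a * b) = d i a * b + a * d i b) \<and>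
     (\<forall>i<m. \<forall>j<m. \<forall>a. d i (d j a) = d j (d i a))"

definition valid_op :: "nat \<Rightarrow> dop \<Rightarrow> bool" where
  "valid_op m \<theta> \<longleftrightarrow> Poly_Mapping.keys \<theta> \<subseteq> {..<m}"

definition valid_var :: "nat \<Rightarrow> nat \<Rightarrow> dvar \<Rightarrow> bool" where
  "valid_var m l v \<longleftrightarrow> valid_op m (fst v) \<and> snd v < l"

definition op_ord :: "dop \<Rightarrow> nat" where
  "op_ord \<theta> = (\<Sum>i\<in>Poly_Mapping.keys \<theta>. Poly_Mapping.lookup \<theta> i)"

definition var_ord :: "dvar \<Rightarrow> nat" where
  "var_ord v = op_ord (fst v)"

definition apply_op_var :: "dop \<Rightarrow> dvar \<Rightarrow> dvar" where
  "apply_op_var \<theta> v = (\<theta> + fst v, snd v)"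

definition is_proper_derivative :: "dvar \<Rightarrow> dvar \<Rightarrow> bool" where
  "is_proper_derivative v u \<longleftrightarrow> (\<exists>\<theta>. \<theta> \<noteq> 0 \<and> v = apply_op_var \<theta> u)"

definition vars :: "'k::zero dpoly \<Rightarrow> dvar set" where
  "vars p = (\<Union>M\<in>Poly_Mapping.keys p. Poly_Mapping.keys M)"

definition dring :: "nat \<Rightarrow> nat \<Rightarrow> 'k::zero dpoly set" where
  "dring m l = {p. \<forall>v\<in>vars p. valid_var m l v}"

definition dring_h :: "nat \<Rightarrow> nat \<Rightarrow> nat \<Rightarrow> 'k::zero dpoly set" where
  "dring_h m l h = {p \<in> dring m l. \<forall>v\<in>vars p. var_ord v \<le> h}"

definition pvar :: "dvar \<Rightarrow> 'k::{zero,one} dpoly" where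
  "pvar v = Poly_Mapping.single (Poly_Mapping.single v 1) 1"

definition pderiv_var :: "dvar \<Rightarrow> 'k::comm_ring_1 dpoly \<Rightarrow> 'k dpoly" where
  "pderiv_var v p = (\<Sum>M\<in>Poly_Mapping.keys p.
      Poly_Mapping.single (M - Poly_Mapping.single v 1) (Poly_Mapping.lookup p M * of_nat (Poly_Mapping.lookup M v)))"

definition dderiv :: "(nat \<Rightarrow> 'k::comm_ring_1 \<Rightarrow> 'k) \<Rightarrow> nat \<Rightarrow> 'k dpoly \<Rightarrow> 'k dpoly" where
  "dderiv d i p = (\<Sum>M\<in>Poly_Mapping.keys p. Poly_Mapping.single M (d i (Poly_Mapping.lookup p M)))
     + (\<Sum>v\<in>vars p. pderiv_var v p * pvar (apply_op_var (Poly_Mapping.single i 1) v))"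

definition apply_op :: "(nat \<Rightarrow> 'k::comm_ring_1 \<Rightarrow> 'k) \<Rightarrow> nat \<Rightarrow> dop \<Rightarrow> 'k dpoly \<Rightarrow> 'k dpoly" where
  "apply_op d m \<theta> p = foldr (\<lambda>i q. (dderiv d i ^^ Poly_Mapping.lookup \<theta> i) q) [0..<m] p"

definition is_ideal_in :: "'a::comm_ring_1 set \<Rightarrow> 'a set \<Rightarrow> bool" where
  "is_ideal_in S J \<longleftrightarrow> J \<subseteq> S \<and> 0 \<in> J \<and> (\<forall>a\<in>J. \<forall>b\<in>J. a + b \<in> J) \<and> (\<forall>a\<in>J. \<forall>r\<in>S. r * a \<in> J)"

definition ideal_gen :: "'a::comm_ring_1 set \<Rightarrow> 'a set \<Rightarrow> 'a set" where
  "ideal_gen S G = \<Inter>{J. G \<subseteq> J \<and> is_ideal_in S J}"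

definition is_diff_ideal :: "(nat \<Rightarrow> 'k::comm_ring_1 \<Rightarrow> 'k) \<Rightarrow> nat \<Rightarrow> nat \<Rightarrow> 'k dpoly set \<Rightarrow> bool" where
  "is_diff_ideal d m l J \<longleftrightarrow> is_ideal_in (dring m l) J \<and> (\<forall>i<m. \<forall>a\<in>J. dderiv d i a \<in> J)"

definition diff_ideal_gen :: "(nat \<Rightarrow> 'k::comm_ring_1 \<Rightarrow> 'k) \<Rightarrow> nat \<Rightarrow> nat \<Rightarrow> 'k dpoly set \<Rightarrow> 'k dpoly set" where
  "diff_ideal_gen d m l F = \<Inter>{J. F \<subseteq> J \<and> is_diff_ideal d m l J}"

definition saturation :: "'a::comm_ring_1 set \<Rightarrow> 'a set \<Rightarrow> 'a \<Rightarrow> 'a set" where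
  "saturation S J H = {a \<in> S. \<exists>n. H ^ n * a \<in> J}"

definition is_radical_in :: "'a::comm_ring_1 set \<Rightarrow> 'a set \<Rightarrow> bool" where
  "is_radical_in S J \<longleftrightarrow> (\<forall>a\<in>S. \<forall>n. a ^ n \<in> J \<longrightarrow> a \<in> J)"

text \<open>rk u v means u \<le> v in the ranking.\<close>
definition is_ranking :: "nat \<Rightarrow> nat \<Rightarrow> (dvar \<Rightarrow> dvar \<Rightarrow> bool) \<Rightarrow> bool" where
  "is_ranking m l rk \<longleftrightarrow>
     (\<forall>u. valid_var m l u \<longrightarrow> rk u u) \<and>
     (\<forall>u v. valid_var m l u \<longrightarrow> valid_var m l v \<longrightarrow> rk u v \<longrightarrow> rk v u \<longrightarrow> u = v) \<and>
     (\<forall>u v w. valid_var m l u \<longrightarrow> valid_var m l v \<longrightarrow> valid_var m l w \<longrightarrow> rk u v \<longrightarrow> rk v w \<longrightarrow> rk u w) \<and>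
     (\<forall>u v. valid_var m l u \<longrightarrow> valid_var m l v \<longrightarrow> rk u v \<or> rk v u) \<and>
     (\<forall>\<theta> u. valid_op m \<theta> \<longrightarrow> valid_var m l u \<longrightarrow> rk u (apply_op_var \<theta> u)) \<and>
     (\<forall>\<theta> u v. valid_op m \<theta> \<longrightarrow> valid_var m l u \<longrightarrow> valid_var m l v \<longrightarrow> rk v u
                \<longrightarrow> rk (apply_op_var \<theta> v) (apply_op_var \<theta> u))"

definition rk_less :: "(dvar \<Rightarrow> dvar \<Rightarrow> bool) \<Rightarrow> dvar \<Rightarrow> dvar \<Rightarrow> bool" where
  "rk_less rk u v \<longleftrightarrow> rk u v \<and> u \<noteq> v"

definition is_orderly :: "nat \<Rightarrow> nat \<Rightarrow> (dvar \<Rightarrow> dvar \<Rightarrow> bool) \<Rightarrow> bool" where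
  "is_orderly m l rk \<longleftrightarrow> (\<forall>u v. valid_var m l u \<longrightarrow> valid_var m l v \<longrightarrow>
       var_ord v < var_ord u \<longrightarrow> rk_less rk v u)"

definition deg_in :: "dvar \<Rightarrow> 'k::zero dpoly \<Rightarrow> nat" where
  "deg_in v p = Max (insert 0 ((\<lambda>M. Poly_Mapping.lookup M v) ` Poly_Mapping.keys p))"

definition leader :: "(dvar \<Rightarrow> dvar \<Rightarrow> bool) \<Rightarrow> 'k::zero dpoly \<Rightarrow> dvar" where
  "leader rk p = (THE u. u \<in> vars p \<and> (\<forall>v\<in>vars p. rk v u))"

definition lcoeff_in :: "dvar \<Rightarrow> 'k::comm_ring_1 dpoly \<Rightarrow> 'k dpoly" where
  "lcoeff_in u p = (\<Sum>M\<in>{M\<in>Poly_Mapping.keys p. Poly_Mapping.lookup M u = deg_in u p}.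
      Poly_Mapping.single (M - Poly_Mapping.single u (deg_in u p)) (Poly_Mapping.lookup p M))"

definition initial :: "(dvar \<Rightarrow> dvar \<Rightarrow> bool) \<Rightarrow> 'k::comm_ring_1 dpoly \<Rightarrow> 'k dpoly" where
  "initial rk p = lcoeff_in (leader rk p) p"

definition separant :: "(dvar \<Rightarrow> dvar \<Rightarrow> bool) \<Rightarrow> 'k::comm_ring_1 dpoly \<Rightarrow> 'k dpoly" where
  "separant rk p = pderiv_var (leader rk p) p"

definition H_of :: "(dvar \<Rightarrow> dvar \<Rightarrow> bool) \<Rightarrow> 'k::comm_ring_1 dpoly list \<Rightarrow> 'k dpoly" where
  "H_of rk A = prod_list (map (\<lambda>c. initial rk c * separant rk c) A)"

definition reduced_wrt :: "(dvar \<Rightarrow> dvar \<Rightarrow> bool) \<Rightarrow> 'k::zero dpoly \<Rightarrow> 'k dpoly \<Rightarrow> bool" where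
  "reduced_wrt rk f g \<longleftrightarrow>
     (\<forall>v\<in>vars f. \<not> is_proper_derivative v (leader rk g)) \<and>
     deg_in (leader rk g) f < deg_in (leader rk g) g"

definition prank_less :: "(dvar \<Rightarrow> dvar \<Rightarrow> bool) \<Rightarrow> 'k::zero dpoly \<Rightarrow> 'k dpoly \<Rightarrow> bool" where
  "prank_less rk f g \<longleftrightarrow> rk_less rk (leader rk f) (leader rk g) \<or>
     (leader rk f = leader rk g \<and> deg_in (leader rk f) f < deg_in (leader rk g) g)"

definition prank_eq :: "(dvar \<Rightarrow> dvar \<Rightarrow> bool) \<Rightarrow> 'k::zero dpoly \<Rightarrow> 'k dpoly \<Rightarrow> bool" where
  "prank_eq rk f g \<longleftrightarrow> leader rk f = leader rk g \<and> deg_in (leader rk f) f = deg_in (leader rk g) g"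

text \<open>An autoreduced set, listed in increasing rank.  Elements are not in k, i.e. nonconstant.\<close>
definition autoreduced :: "nat \<Rightarrow> nat \<Rightarrow> (dvar \<Rightarrow> dvar \<Rightarrow> bool) \<Rightarrow> 'k::zero dpoly list \<Rightarrow> bool" where
  "autoreduced m l rk A \<longleftrightarrow>
     set A \<subseteq> dring m l \<and> (\<forall>a\<in>set A. vars a \<noteq> {}) \<and>
     (\<forall>i j. i < j \<longrightarrow> j < length A \<longrightarrow> prank_less rk (A ! i) (A ! j)) \<and>
     (\<forall>i j. i < length A \<longrightarrow> j < length A \<longrightarrow> i \<noteq> j \<longrightarrow> reduced_wrt rk (A ! i) (A ! j))"

text \<open>Lexicographic comparison; a proper extension has lower rank.\<close>
definition aset_less :: "(dvar \<Rightarrow> dvar \<Rightarrow> bool) \<Rightarrow> 'k::zero dpoly list \<Rightarrow> 'k dpoly list \<Rightarrow> bool" where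
  "aset_less rk A B \<longleftrightarrow> (\<exists>i. (\<forall>j<i. j < length A \<and> j < length B \<and> prank_eq rk (A ! j) (B ! j)) \<and>
      ((i < length A \<and> i < length B \<and> prank_less rk (A ! i) (B ! i)) \<or>
       (i = length B \<and> i < length A)))"

definition kolchin_char_set :: "nat \<Rightarrow> nat \<Rightarrow> (dvar \<Rightarrow> dvar \<Rightarrow> bool) \<Rightarrow> 'k::zero dpoly set \<Rightarrow> 'k dpoly list \<Rightarrow> bool" where
  "kolchin_char_set m l rk J A \<longleftrightarrow> autoreduced m l rk A \<and> set A \<subseteq> J \<and>
     \<not> (\<exists>B. autoreduced m l rk B \<and> set B \<subseteq> J \<and> aset_less rk B A)"

definition characterizable :: "(nat \<Rightarrow> 'k::field_char_0 \<Rightarrow> 'k) \<Rightarrow> nat \<Rightarrow> nat \<Rightarrow> (dvar \<Rightarrow> dvar \<Rightarrow> bool) \<Rightarrow> 'k dpoly set \<Rightarrow> bool" where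
  "characterizable d m l rk J \<longleftrightarrow> is_diff_ideal d m l J \<and> is_radical_in (dring m l) J \<and>
     (\<exists>A. kolchin_char_set m l rk J A \<and> J = saturation (dring m l) (diff_ideal_gen d m l (set A)) (H_of rk A))"

definition char_ideal :: "(nat \<Rightarrow> 'k::field_char_0 \<Rightarrow> 'k) \<Rightarrow> nat \<Rightarrow> nat \<Rightarrow> (dvar \<Rightarrow> dvar \<Rightarrow> bool) \<Rightarrow> 'k dpoly list \<Rightarrow> 'k dpoly set" where
  "char_ideal d m l rk C = saturation (dring m l) (diff_ideal_gen d m l (set C)) (H_of rk C)"

definition truncated_ideal :: "(nat \<Rightarrow> 'k::field_char_0 \<Rightarrow> 'k) \<Rightarrow> nat \<Rightarrow> nat \<Rightarrow> (dvar \<Rightarrow> dvar \<Rightarrow> bool) \<Rightarrow> nat \<Rightarrow> 'k dpoly list \<Rightarrow> 'k dpoly set" where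
  "truncated_ideal d m l rk h C = saturation (dring_h m l h)
     (ideal_gen (dring_h m l h)
        {apply_op d m \<theta> (C ! j) | \<theta> j. j < length C \<and> valid_op m \<theta> \<and>
            var_ord (apply_op_var \<theta> (leader rk (C ! j))) \<le> h})
     (H_of rk C)"

definition order_bound :: "nat \<Rightarrow> 'k::zero dpoly list \<Rightarrow> bool" where
  "order_bound h C \<longleftrightarrow> (\<forall>c\<in>set C. \<forall>v\<in>vars c. var_ord v \<le> h)"

end

theory Submission
  imports Defs
begin


abbreviation lk where "lk \<equiv> Poly_Mapping.lookup"
abbreviation ks where "ks \<equiv> Poly_Mapping.keys"
abbreviation sng where "sng \<equiv> Poly_Mapping.single"

lemma poly_expand:
  fixes p :: "'a \<Rightarrow>\<^sub>0 'b::comm_monoid_add"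
  shows "p = (\<Sum>M\<in>ks p. sng M (lk p M))"
proof (rule poly_mapping_eqI)
  fix k
  have "lk (\<Sum>M\<in>ks p. sng M (lk p M)) k = (\<Sum>M\<in>ks p. lk (sng M (lk p M)) k)"
    by (simp add: lookup_sum)
  also have "\<dots> = (\<Sum>M\<in>ks p. if M = k then lk p M else 0)"
    by (intro sum.cong) (auto simp: lookup_single)
  also have "\<dots> = lk p k"
    by (auto simp: sum.delta in_keys_iff)
  finally show "lk p k = lk (\<Sum>M\<in>ks p. sng M (lk p M)) k" by simp
qed

lemma keys_add_nat: "ks (a + b :: 'a \<Rightarrow>\<^sub>0 nat) = ks a \<union> ks b"
  by (auto simp: in_keys_iff lookup_add)

lemma keys_uminus: "ks (- p :: 'a \<Rightarrow>\<^sub>0 'b::ab_group_add) = ks p"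
  by (auto simp: in_keys_iff)

lemma finite_vars: "finite (vars p)"
  by (simp add: vars_def)

lemma vars_add: "vars (p + q) \<subseteq> vars p \<union> vars q"
  unfolding vars_def using keys_add[of p q] by blast

lemma vars_uminus: "vars (- p :: 'k::comm_ring_1 dpoly) = vars p"
  unfolding vars_def by (simp add: keys_uminus)

lemma vars_diff: "vars (p - q :: 'k::comm_ring_1 dpoly) \<subseteq> vars p \<union> vars q"
  using vars_add[of p "-q"] by (simp add: vars_uminus)

lemma vars_mult: "vars (p * q :: 'k::comm_ring_1 dpoly) \<subseteq> vars p \<union> vars q"
proof
  fix x assume "x \<in> vars (p*q)"
  then obtain M where M: "M \<in> ks (p*q)" "x \<in> ks M" unfolding vars_def by blast
  then obtain a b where "M = a + b" "a \<in> ks p" "b \<in> ks q" using keys_mult[of p q] by blast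
  then show "x \<in> vars p \<union> vars q" using M unfolding vars_def by (auto simp: keys_add_nat)
qed

lemma vars_single: "vars (sng M c) \<subseteq> ks M"
  unfolding vars_def by auto

lemma vars_const: "vars (sng 0 c) = {}"
  unfolding vars_def by auto

lemma vars_zero[simp]: "vars 0 = {}" unfolding vars_def by auto
lemma vars_one[simp]: "vars (1 :: 'k::comm_ring_1 dpoly) = {}" unfolding vars_def by auto

lemma vars_sum: "vars (sum f A) \<subseteq> (\<Union>a\<in>A. vars (f a))"
proof (induction A rule: infinite_finite_induct)
  case (insert x F)
  then show ?case using vars_add[of "f x" "sum f F"] by auto
qed auto

lemma vars_prod: "vars (prod f A :: 'k::comm_ring_1 dpoly) \<subseteq> (\<Union>a\<in>A. vars (f a))"
proof (induction A rule: infinite_finite_induct)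
  case (insert x F)
  then show ?case using vars_mult[of "f x" "prod f F"] by auto
qed auto

lemma vars_power: "vars (p ^ n :: 'k::comm_ring_1 dpoly) \<subseteq> vars p"
proof (induction n)
  case (Suc n)
  then show ?case using vars_mult[of p "p^n"] by auto
qed auto

lemma vars_pvar: "vars (pvar v :: 'k::comm_ring_1 dpoly) = {v}"
  unfolding vars_def pvar_def by auto

lemma vars_prod_list: "vars (prod_list (map f xs) :: 'k::comm_ring_1 dpoly) \<subseteq> (\<Union>a\<in>set xs. vars (f a))"
proof (induction xs)
  case (Cons x xs)
  then show ?case using vars_mult[of "f x" "prod_list (map f xs)"] by auto
qed auto

lemma vars_empty_const:
  assumes "vars p = {}" shows "p = sng 0 (lk p 0)"
proof (rule poly_mapping_eqI)
  fix k show "lk p k = lk (sng 0 (lk p 0)) k"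
  proof (cases "k = 0")
    case False
    then have "k \<notin> ks p" using assms unfolding vars_def by auto
    then show ?thesis using False by (simp add: in_keys_iff lookup_single)
  qed simp
qed


lemma keys_sum_gen: "ks (sum b I) \<subseteq> (\<Union>i\<in>I. ks (b i))"
proof (induction I rule: infinite_finite_induct)
  case (insert x F)
  then show ?case using keys_add[of "b x" "sum b F"] by auto
qed auto

section \<open>Degree bounds\<close>

definition bnd :: "dvar \<Rightarrow> nat \<Rightarrow> 'k::zero dpoly \<Rightarrow> bool" where
  "bnd w D p \<longleftrightarrow> (\<forall>M\<in>ks p. lk M w \<le> D)"

lemma bnd_zero[simp]: "bnd w D 0" by (simp add: bnd_def)

lemma bnd_add: "bnd w D p \<Longrightarrow> bnd w D q \<Longrightarrow> bnd w D (p + q)"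
  unfolding bnd_def using keys_add[of p q] by blast

lemma bnd_uminus: "bnd w D (- p :: 'k::comm_ring_1 dpoly) = bnd w D p"
  unfolding bnd_def by (simp add: keys_uminus)

lemma bnd_diff: "bnd w D p \<Longrightarrow> bnd w D q \<Longrightarrow> bnd w D (p - q :: 'k::comm_ring_1 dpoly)"
  using bnd_add[of w D p "-q"] by (simp add: bnd_uminus)

lemma bnd_mult: "bnd w a p \<Longrightarrow> bnd w b q \<Longrightarrow> bnd w (a + b) (p * q :: 'k::comm_ring_1 dpoly)"
  unfolding bnd_def
proof
  fix M assume A: "\<forall>M\<in>ks p. lk M w \<le> a" "\<forall>M\<in>ks q. lk M w \<le> b" "M \<in> ks (p * q)"
  then obtain x y where "M = x + y" "x \<in> ks p" "y \<in> ks q" using keys_mult[of p q] by blast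
  then show "lk M w \<le> a + b" using A by (simp add: lookup_add add_mono)
qed

lemma bnd_mono: "bnd w a p \<Longrightarrow> a \<le> b \<Longrightarrow> bnd w b p"
  unfolding bnd_def by force

lemma bnd_notin: "w \<notin> vars p \<Longrightarrow> bnd w 0 p"
  unfolding bnd_def vars_def by (auto simp: in_keys_iff)

lemma bnd_sum: "(\<And>a. a \<in> A \<Longrightarrow> bnd w D (f a)) \<Longrightarrow> bnd w D (sum f A)"
  unfolding bnd_def using keys_sum_gen[of f A] by blast

lemma bnd_power0: "bnd w 0 p \<Longrightarrow> bnd w 0 (p ^ n :: 'k::comm_ring_1 dpoly)"
proof (induction n)
  case 0 then show ?case by (simp add: bnd_def)
next
  case (Suc n) then show ?case using bnd_mult[of w 0 p 0 "p^n"] by simp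
qed

lemma pvar_power: "(pvar v :: 'k::comm_ring_1 dpoly) ^ n = sng (sng v n) 1"
proof (induction n)
  case 0 then show ?case by simp
next
  case (Suc n) then show ?case by (simp add: pvar_def mult_single single_add[symmetric] add.commute)
qed

lemma bnd_pvar_power: "bnd v n ((pvar v :: 'k::comm_ring_1 dpoly) ^ n)"
  unfolding bnd_def pvar_power by simp

lemma bnd_pvar_power_other: "w \<noteq> v \<Longrightarrow> bnd w 0 ((pvar v :: 'k::comm_ring_1 dpoly) ^ n)"
  using vars_power[of "pvar v" n] by (intro bnd_notin) (auto simp: vars_pvar)

lemma deg_in_le: "deg_in w p \<le> D \<longleftrightarrow> bnd w D p"
  unfolding deg_in_def bnd_def by simp

lemma bnd_deg: "bnd w (deg_in w p) p"
  using deg_in_le by blast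

lemma deg_in_notin: "w \<notin> vars p \<Longrightarrow> deg_in w p = 0"
  using bnd_notin[of w p] deg_in_le[of w p 0] by simp

lemma deg_in_pos: "w \<in> vars p \<Longrightarrow> 0 < deg_in w p"
proof -
  assume "w \<in> vars p"
  then obtain M where "M \<in> ks p" "w \<in> ks M" unfolding vars_def by blast
  then have "\<not> bnd w 0 p" unfolding bnd_def by (auto simp: in_keys_iff)
  then show ?thesis using deg_in_le[of w p 0] by simp
qed

definition cpart :: "dvar \<Rightarrow> nat \<Rightarrow> 'k::comm_ring_1 dpoly \<Rightarrow> 'k dpoly" where
  "cpart v D f = (\<Sum>M\<in>{M\<in>ks f. lk M v = D}. sng (M - sng v D) (lk f M))"

definition rpart :: "dvar \<Rightarrow> nat \<Rightarrow> 'k::comm_ring_1 dpoly \<Rightarrow> 'k dpoly" where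
  "rpart v D f = (\<Sum>M\<in>{M\<in>ks f. lk M v \<noteq> D}. sng M (lk f M))"

lemma lcoeff_cpart: "lcoeff_in u p = cpart u (deg_in u p) p"
  unfolding lcoeff_in_def cpart_def by simp

lemma minus_plus_single: "lk M v = D \<Longrightarrow> M - sng v D + sng v D = (M :: dvar \<Rightarrow>\<^sub>0 nat)"
  by (rule poly_mapping_eqI) (auto simp: lookup_add lookup_minus lookup_single when_def)

lemma dec: "f = cpart v D f * pvar v ^ D + rpart v D (f :: 'k::comm_ring_1 dpoly)"
proof -
  have fin: "finite (ks f)" by simp
  have "cpart v D f * pvar v ^ D = (\<Sum>M\<in>{M\<in>ks f. lk M v = D}. sng M (lk f M))"
    unfolding cpart_def pvar_power sum_distrib_right
    by (intro sum.cong) (auto simp: mult_single minus_plus_single)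
  then have "cpart v D f * pvar v ^ D + rpart v D f
     = (\<Sum>M\<in>{M\<in>ks f. lk M v = D} \<union> {M\<in>ks f. lk M v \<noteq> D}. sng M (lk f M))"
    unfolding rpart_def by (subst sum.union_disjoint) auto
  also have "{M\<in>ks f. lk M v = D} \<union> {M\<in>ks f. lk M v \<noteq> D} = ks f" by auto
  finally show ?thesis using poly_expand[of f] by simp
qed

lemma vars_cpart: "vars (cpart v D f) \<subseteq> vars f - {v}"
proof
  fix x assume "x \<in> vars (cpart v D f)"
  then obtain M where M: "M \<in> ks f" "lk M v = D" "x \<in> vars (sng (M - sng v D) (lk f M))"
    unfolding cpart_def using vars_sum by blast
  then have "x \<in> ks (M - sng v D)" using vars_single by blast
  then show "x \<in> vars f - {v}" using M(1,2) unfolding vars_def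
    by (auto simp: in_keys_iff lookup_minus lookup_single when_def split: if_splits)
qed

lemma vars_rpart: "vars (rpart v D f) \<subseteq> vars f"
proof
  fix x assume "x \<in> vars (rpart v D f)"
  then obtain M where M: "M \<in> ks f" "x \<in> vars (sng M (lk f M))"
    unfolding rpart_def using vars_sum by blast
  then show "x \<in> vars f" using vars_single unfolding vars_def by blast
qed

lemma bnd_rpart: "bnd v D f \<Longrightarrow> bnd v (D - 1) (rpart v D f)"
  unfolding rpart_def by (intro bnd_sum) (auto simp: bnd_def)

lemma bnd_rpart_other: "bnd w X f \<Longrightarrow> bnd w X (rpart v D f)"
  unfolding rpart_def by (intro bnd_sum) (auto simp: bnd_def)

lemma bnd_cpart_other: "w \<noteq> v \<Longrightarrow> bnd w X f \<Longrightarrow> bnd w X (cpart v D f)"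
  unfolding cpart_def by (intro bnd_sum) (auto simp: bnd_def lookup_minus lookup_single)

section \<open>Pseudo-division\<close>

lemma pseudo_div:
  fixes g I g0 :: "'k::comm_ring_1 dpoly"
  assumes g: "g = I * pvar v ^ e + g0" and vI: "v \<notin> vars I" and b0: "bnd v (e - 1) g0" and e: "e \<ge> 1"
  shows "bnd v D f \<Longrightarrow> \<exists>a q r. I ^ a * f = q * g + r \<and> bnd v (e - 1) r
     \<and> vars q \<subseteq> vars f \<union> vars I \<union> vars g0 \<union> {v} \<and> vars r \<subseteq> vars f \<union> vars I \<union> vars g0 \<union> {v}
     \<and> (\<forall>w X. w \<noteq> v \<longrightarrow> w \<notin> vars I \<longrightarrow> w \<notin> vars g0 \<longrightarrow> bnd w X f \<longrightarrow> bnd w X q \<and> bnd w X r)"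
proof (induction D arbitrary: f rule: less_induct)
  case (less D)
  show ?case
  proof (cases "D < e")
    case True
    then have "bnd v (e - 1) f" using less.prems bnd_mono by fastforce
    then show ?thesis by (intro exI[of _ 0] exI[of _ 0] exI[of _ f]) auto
  next
    case False
    define F where "F = cpart v D f"
    define f0 where "f0 = rpart v D f"
    define f1 where "f1 = I * f0 - F * pvar v ^ (D - e) * g0"
    have fd: "f = F * pvar v ^ D + f0" unfolding F_def f0_def by (rule dec)
    have pw: "pvar v ^ D = pvar v ^ (D - e) * (pvar v ^ e :: 'k dpoly)"
      using False by (simp add: power_add[symmetric])
    have eq: "I * f = f1 + F * pvar v ^ (D - e) * g"
      unfolding f1_def fd g pw by (simp add: algebra_simps)
    have vF: "v \<notin> vars F" using vars_cpart unfolding F_def by blast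
    have bf0: "bnd v (D - 1) f0" unfolding f0_def by (rule bnd_rpart[OF less.prems])
    have "bnd v (0 + (D - 1)) (I * f0)"
      by (rule bnd_mult[OF bnd_notin[OF vI] bf0])
    moreover have "bnd v (0 + (D - e) + (e - 1)) (F * pvar v ^ (D - e) * g0)"
      by (intro bnd_mult bnd_notin vF bnd_pvar_power b0)
    ultimately have bf1: "bnd v (D - 1) f1" unfolding f1_def
      using False e by (intro bnd_diff) auto
    have "D - 1 < D" using False e by simp
    from less.IH[OF this bf1] obtain a q r where
      IH: "I ^ a * f1 = q * g + r" "bnd v (e - 1) r"
        "vars q \<subseteq> vars f1 \<union> vars I \<union> vars g0 \<union> {v}" "vars r \<subseteq> vars f1 \<union> vars I \<union> vars g0 \<union> {v}"
        "\<forall>w X. w \<noteq> v \<longrightarrow> w \<notin> vars I \<longrightarrow> w \<notin> vars g0 \<longrightarrow> bnd w X f1 \<longrightarrow> bnd w X q \<and> bnd w X r"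
      by blast
    define q' where "q' = q + I ^ a * F * pvar v ^ (D - e)"
    have "I ^ Suc a * f = I ^ a * (I * f)" by (simp add: ac_simps)
    also have "\<dots> = I ^ a * f1 + (I ^ a * F * pvar v ^ (D - e)) * g"
      unfolding eq by (simp add: distrib_left ac_simps)
    also have "\<dots> = q' * g + r" unfolding IH(1) q'_def by (simp add: algebra_simps)
    finally have "I ^ Suc a * f = q' * g + r" .
    moreover
    have vF': "vars F \<subseteq> vars f" using vars_cpart unfolding F_def by blast
    have vf0: "vars f0 \<subseteq> vars f" using vars_rpart unfolding f0_def by blast
    have vpw: "vars (pvar v ^ (D - e) :: 'k dpoly) \<subseteq> {v}" using vars_power[of "pvar v" "D - e"] by (simp add: vars_pvar)
    have vf1: "vars f1 \<subseteq> vars f \<union> vars I \<union> vars g0 \<union> {v}"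
      unfolding f1_def using vars_diff[of "I * f0" "F * pvar v ^ (D - e) * g0"] vars_mult[of I f0]
        vars_mult[of "F * pvar v ^ (D - e)" g0] vars_mult[of F "pvar v ^ (D - e)"] vF' vf0 vpw by blast
    have "vars q' \<subseteq> vars f \<union> vars I \<union> vars g0 \<union> {v}"
      unfolding q'_def using IH(3) vf1 vars_add[of q "I ^ a * F * pvar v ^ (D - e)"]
        vars_mult[of "I ^ a * F" "pvar v ^ (D - e)"] vars_mult[of "I ^ a" F] vars_power[of I a] vF' vpw by blast
    moreover have "vars r \<subseteq> vars f \<union> vars I \<union> vars g0 \<union> {v}" using IH(4) vf1 by blast
    moreover have "bnd w X q' \<and> bnd w X r" if w: "w \<noteq> v" "w \<notin> vars I" "w \<notin> vars g0" "bnd w X f" for w X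
    proof -
      have bF: "bnd w X F" unfolding F_def by (rule bnd_cpart_other[OF w(1) w(4)])
      have "bnd w (0 + X) (I * f0)"
        by (intro bnd_mult bnd_notin w(2)) (unfold f0_def, rule bnd_rpart_other[OF w(4)])
      moreover have "bnd w (X + 0 + 0) (F * pvar v ^ (D - e) * g0)"
        by (intro bnd_mult bF bnd_pvar_power_other w(1) bnd_notin w(3))
      ultimately have "bnd w X f1" unfolding f1_def by (intro bnd_diff) auto
      then have "bnd w X q" "bnd w X r" using IH(5) w by blast+
      moreover have "bnd w (0 + X + 0) (I ^ a * F * pvar v ^ (D - e))"
        by (intro bnd_mult bnd_power0 bnd_notin w(2) bF bnd_pvar_power_other w(1))
      ultimately show ?thesis unfolding q'_def by (auto intro: bnd_add)
    qed
    ultimately show ?thesis using IH(2) by blast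
  qed
qed


definition lin :: "((dvar \<Rightarrow>\<^sub>0 nat) \<Rightarrow> 'k::zero \<Rightarrow> 'b::comm_monoid_add) \<Rightarrow> 'k dpoly \<Rightarrow> 'b" where
  "lin \<phi> p = (\<Sum>M\<in>ks p. \<phi> M (lk p M))"

lemma lin_superset:
  assumes "finite A" "ks p \<subseteq> A" "\<And>M. \<phi> M 0 = 0"
  shows "lin \<phi> p = (\<Sum>M\<in>A. \<phi> M (lk p M))"
  unfolding lin_def using assms by (intro sum.mono_neutral_left) (auto simp: in_keys_iff)

lemma lin_add:
  assumes "\<And>M. \<phi> M 0 = 0" "\<And>M a b. \<phi> M (a + b) = \<phi> M a + \<phi> M b"
  shows "lin \<phi> (p + q) = lin \<phi> p + lin \<phi> (q :: 'k::comm_monoid_add dpoly)"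
proof -
  let ?A = "ks p \<union> ks q"
  have "lin \<phi> (p + q) = (\<Sum>M\<in>?A. \<phi> M (lk (p + q) M))"
    using keys_add[of p q] assms by (intro lin_superset) auto
  also have "\<dots> = (\<Sum>M\<in>?A. \<phi> M (lk p M)) + (\<Sum>M\<in>?A. \<phi> M (lk q M))"
    by (simp add: lookup_add assms sum.distrib)
  also have "\<dots> = lin \<phi> p + lin \<phi> q"
    by (simp add: lin_superset[of ?A p \<phi>] lin_superset[of ?A q \<phi>] assms(1))
  finally show ?thesis .
qed

lemma lin_zero[simp]: "lin \<phi> 0 = 0" unfolding lin_def by simp

lemma lin_single: "(\<And>M. \<phi> M 0 = 0) \<Longrightarrow> lin \<phi> (sng M c) = \<phi> M c"
  unfolding lin_def by auto

lemma lin_sum: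
  assumes "\<And>M. \<phi> M 0 = 0" "\<And>M a b. \<phi> M (a + b) = \<phi> M a + \<phi> M b"
  shows "lin \<phi> (sum f A) = (\<Sum>a\<in>A. lin \<phi> (f a :: 'k::comm_monoid_add dpoly))"
proof (induction A rule: infinite_finite_induct)
  case (insert x F) then show ?case by (simp add: lin_add[OF assms])
qed auto

lemma pderiv_lin: "pderiv_var v p = lin (\<lambda>M c. sng (M - sng v 1) (c * of_nat (lk M v))) p"
  unfolding pderiv_var_def lin_def ..

lemma pderiv_add: "pderiv_var v (p + q) = pderiv_var v p + pderiv_var v q"
  unfolding pderiv_lin by (rule lin_add) (auto simp: single_add distrib_right)

lemma pderiv_single: "pderiv_var v (sng M c) = sng (M - sng v 1) (c * of_nat (lk M v))"
  unfolding pderiv_lin by (rule lin_single) simp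

lemma pderiv_sum: "pderiv_var v (sum f A) = (\<Sum>a\<in>A. pderiv_var v (f a))"
  unfolding pderiv_lin by (rule lin_sum) (auto simp: single_add distrib_right)

lemma pderiv_notin: "v \<notin> vars p \<Longrightarrow> pderiv_var v p = 0"
  unfolding pderiv_var_def vars_def by (intro sum.neutral) (auto simp: in_keys_iff)

lemma vars_pderiv: "vars (pderiv_var v p) \<subseteq> vars p"
proof
  fix x assume "x \<in> vars (pderiv_var v p)"
  then obtain M where M: "M \<in> ks p" "x \<in> vars (sng (M - sng v 1) (lk p M * of_nat (lk M v)))"
    unfolding pderiv_var_def using vars_sum by blast
  then have "x \<in> ks (M - sng v 1)" using vars_single by blast
  then have "x \<in> ks M" by (auto simp: in_keys_iff lookup_minus)
  then show "x \<in> vars p" using M(1) unfolding vars_def by blast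
qed

lemma mult_pvar_expand: "(S :: 'k::comm_ring_1 dpoly) * pvar w = (\<Sum>M\<in>ks S. sng (M + sng w 1) (lk S M))"
proof -
  have "S * pvar w = (\<Sum>M\<in>ks S. sng M (lk S M)) * pvar w" by (subst poly_expand[of S]) simp
  also have "\<dots> = (\<Sum>M\<in>ks S. sng (M + sng w 1) (lk S M))"
    unfolding sum_distrib_right pvar_def by (simp add: mult_single)
  finally show ?thesis .
qed

lemma pderiv_linear_form:
  fixes S T :: "'k::comm_ring_1 dpoly"
  assumes "w \<notin> vars S" "w \<notin> vars T"
  shows "pderiv_var w (S * pvar w + T) = S"
proof -
  have "pderiv_var w (S * pvar w) = (\<Sum>M\<in>ks S. pderiv_var w (sng (M + sng w 1) (lk S M)))"
    unfolding mult_pvar_expand pderiv_sum ..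
  also have "\<dots> = (\<Sum>M\<in>ks S. sng M (lk S M))"
  proof (intro sum.cong refl)
    fix M assume "M \<in> ks S"
    then have "lk M w = 0" using assms(1) unfolding vars_def by (auto simp: in_keys_iff)
    moreover have "M + sng w 1 - sng w 1 = M" by (rule poly_mapping_eqI) (simp add: lookup_minus lookup_add)
    ultimately show "pderiv_var w (sng (M + sng w 1) (lk S M)) = sng M (lk S M)"
      by (simp add: pderiv_single lookup_add)
  qed
  also have "\<dots> = S" using poly_expand[of S] by simp
  finally show ?thesis using pderiv_notin[OF assms(2)] by (simp add: pderiv_add)
qed

abbreviation dv :: "nat \<Rightarrow> dvar \<Rightarrow> dvar" where "dv i x \<equiv> apply_op_var (sng i 1) x"

definition dcoef :: "(nat \<Rightarrow> 'k::comm_ring_1 \<Rightarrow> 'k) \<Rightarrow> nat \<Rightarrow> 'k dpoly \<Rightarrow> 'k dpoly" where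
  "dcoef d i p = (\<Sum>M\<in>ks p. sng M (d i (lk p M)))"

lemma vars_dcoef: "vars (dcoef d i p) \<subseteq> vars p"
proof
  fix x assume "x \<in> vars (dcoef d i p)"
  then obtain M where M: "M \<in> ks p" "x \<in> vars (sng M (d i (lk p M)))"
    unfolding dcoef_def using vars_sum by blast
  then show "x \<in> vars p" using vars_single unfolding vars_def by blast
qed

lemma dderiv_alt: "dderiv d i p = dcoef d i p + (\<Sum>v\<in>vars p. pderiv_var v p * pvar (dv i v))"
  unfolding dderiv_def dcoef_def ..

lemma vars_dderiv: "vars (dderiv d i p) \<subseteq> vars p \<union> dv i ` vars p"
proof -
  have "vars (\<Sum>v\<in>vars p. pderiv_var v p * pvar (dv i v)) \<subseteq> vars p \<union> dv i ` vars p"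
  proof (rule order.trans[OF vars_sum], rule UN_least)
    fix v assume v: "v \<in> vars p"
    show "vars (pderiv_var v p * pvar (dv i v)) \<subseteq> vars p \<union> dv i ` vars p"
      using vars_mult[of "pderiv_var v p" "pvar (dv i v)"] vars_pderiv[of v p] v
      by (auto simp: vars_pvar)
  qed
  then show ?thesis unfolding dderiv_alt using vars_add vars_dcoef by blast
qed

lemma dderiv_split:
  fixes q :: "'k::comm_ring_1 dpoly"
  shows "dderiv d i q = pderiv_var w q * pvar (dv i w)
     + (dcoef d i q + (\<Sum>x\<in>vars q - {w}. pderiv_var x q * pvar (dv i x)))"
proof (cases "w \<in> vars q")
  case True
  then show ?thesis unfolding dderiv_alt
    by (simp add: sum.remove[OF finite_vars True] ac_simps)
next
  case False
  then show ?thesis unfolding dderiv_alt by (simp add: pderiv_notin)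
qed

lemma vars_dderiv_rest:
  "vars (dcoef d i q + (\<Sum>x\<in>vars q - {w}. pderiv_var x q * pvar (dv i x)))
     \<subseteq> vars q \<union> dv i ` (vars q - {w})"
proof -
  have "vars (\<Sum>x\<in>vars q - {w}. pderiv_var x q * pvar (dv i x)) \<subseteq> vars q \<union> dv i ` (vars q - {w})"
  proof (rule order.trans[OF vars_sum], rule UN_least)
    fix v assume v: "v \<in> vars q - {w}"
    show "vars (pderiv_var v q * pvar (dv i v)) \<subseteq> vars q \<union> dv i ` (vars q - {w})"
      using vars_mult[of "pderiv_var v q" "pvar (dv i v)"] vars_pderiv[of v q] v
      by (auto simp: vars_pvar)
  qed
  then show ?thesis using vars_add vars_dcoef by blast
qed





section \<open>Rankings\<close>

lemma apply_op_var_add: "apply_op_var a (apply_op_var b u) = apply_op_var (a + b) u"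
  unfolding apply_op_var_def by (simp add: add.assoc)

lemma apply_op_var_zero[simp]: "apply_op_var 0 u = u"
  unfolding apply_op_var_def by simp

lemma apply_op_var_self: "apply_op_var \<theta> u = u \<longleftrightarrow> \<theta> = 0"
  unfolding apply_op_var_def by (cases u) auto

lemma apply_op_var_inj: "apply_op_var \<theta> x = apply_op_var \<theta> y \<Longrightarrow> x = y"
  unfolding apply_op_var_def by (cases x, cases y) auto

lemma valid_op_add: "valid_op m (a + b) \<longleftrightarrow> valid_op m a \<and> valid_op m b"
  unfolding valid_op_def by (auto simp: keys_add_nat)

lemma valid_apply: "valid_op m \<theta> \<Longrightarrow> valid_var m l u \<Longrightarrow> valid_var m l (apply_op_var \<theta> u)"
  unfolding valid_var_def apply_op_var_def by (simp add: valid_op_add)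

lemma valid_op_single[simp]: "i < m \<Longrightarrow> valid_op m (sng i n)"
  unfolding valid_op_def by simp

lemma single_suc_nz[simp]: "sng i (Suc n) \<noteq> 0"
proof
  assume "sng i (Suc n) = 0"
  then have "lk (sng i (Suc n)) i = lk 0 i" by simp
  then show False by simp
qed

lemma single_one_nz[simp]: "sng i (1::nat) \<noteq> 0"
  using single_suc_nz[of i 0] by simp

lemma valid_dv: "i < m \<Longrightarrow> valid_var m l u \<Longrightarrow> valid_var m l (dv i u)"
  by (intro valid_apply valid_op_single)

lemma proper_deriv_op: "is_proper_derivative x u \<Longrightarrow> valid_var m l x \<Longrightarrow>
   \<exists>\<theta>. \<theta> \<noteq> 0 \<and> valid_op m \<theta> \<and> x = apply_op_var \<theta> u"
  unfolding is_proper_derivative_def valid_var_def apply_op_var_def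
  by (auto simp: valid_op_add)

locale RK =
  fixes m l :: nat and rk :: "dvar \<Rightarrow> dvar \<Rightarrow> bool"
  assumes ranking: "is_ranking m l rk"
begin

abbreviation "VV \<equiv> valid_var m l"

lemma rk_refl: "VV u \<Longrightarrow> rk u u" using ranking unfolding is_ranking_def by blast
lemma rk_antisym: "VV u \<Longrightarrow> VV v \<Longrightarrow> rk u v \<Longrightarrow> rk v u \<Longrightarrow> u = v"
  using ranking unfolding is_ranking_def by blast
lemma rk_trans: "VV u \<Longrightarrow> VV v \<Longrightarrow> VV w \<Longrightarrow> rk u v \<Longrightarrow> rk v w \<Longrightarrow> rk u w"
  using ranking unfolding is_ranking_def by blast
lemma rk_total: "VV u \<Longrightarrow> VV v \<Longrightarrow> rk u v \<or> rk v u"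
  using ranking unfolding is_ranking_def by blast
lemma rk_deriv: "valid_op m \<theta> \<Longrightarrow> VV u \<Longrightarrow> rk u (apply_op_var \<theta> u)"
  using ranking unfolding is_ranking_def by blast
lemma rk_mono: "valid_op m \<theta> \<Longrightarrow> VV u \<Longrightarrow> VV v \<Longrightarrow> rk v u \<Longrightarrow> rk (apply_op_var \<theta> v) (apply_op_var \<theta> u)"
  using ranking unfolding is_ranking_def by blast

lemma rk_less_trans: "VV u \<Longrightarrow> VV v \<Longrightarrow> VV w \<Longrightarrow> rk_less rk u v \<Longrightarrow> rk_less rk v w \<Longrightarrow> rk_less rk u w"
  unfolding rk_less_def using rk_trans rk_antisym by blast
lemma rk_le_less_trans: "VV u \<Longrightarrow> VV v \<Longrightarrow> VV w \<Longrightarrow> rk u v \<Longrightarrow> rk_less rk v w \<Longrightarrow> rk_less rk u w"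
  unfolding rk_less_def using rk_trans rk_antisym by blast
lemma rk_less_le_trans: "VV u \<Longrightarrow> VV v \<Longrightarrow> VV w \<Longrightarrow> rk_less rk u v \<Longrightarrow> rk v w \<Longrightarrow> rk_less rk u w"
  unfolding rk_less_def using rk_trans rk_antisym by blast
lemma rk_less_not_le: "VV u \<Longrightarrow> VV v \<Longrightarrow> rk_less rk u v \<longleftrightarrow> \<not> rk v u"
  unfolding rk_less_def using rk_antisym rk_total rk_refl by blast

lemma rk_less_deriv: "valid_op m \<theta> \<Longrightarrow> \<theta> \<noteq> 0 \<Longrightarrow> VV u \<Longrightarrow> rk_less rk u (apply_op_var \<theta> u)"
  unfolding rk_less_def using rk_deriv apply_op_var_self by metis

lemma rk_less_mono: "valid_op m \<theta> \<Longrightarrow> VV u \<Longrightarrow> VV v \<Longrightarrow> rk_less rk v u \<Longrightarrow>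
   rk_less rk (apply_op_var \<theta> v) (apply_op_var \<theta> u)"
  unfolding rk_less_def using rk_mono apply_op_var_inj by metis

lemma rk_less_dv: "i < m \<Longrightarrow> VV u \<Longrightarrow> rk_less rk u (dv i u)"
  by (rule rk_less_deriv) auto

lemma rk_less_proper: "is_proper_derivative x u \<Longrightarrow> VV x \<Longrightarrow> VV u \<Longrightarrow> rk_less rk u x"
  using proper_deriv_op rk_less_deriv by blast

lemma exists_max:
  assumes "finite S" "S \<noteq> {}" "\<forall>x\<in>S. VV x"
  shows "\<exists>x\<in>S. \<forall>y\<in>S. rk y x"
  using assms
proof (induction S rule: finite_ne_induct)
  case (singleton x) then show ?case using rk_refl by auto
next
  case (insert x F)
  then obtain y where y: "y \<in> F" "\<forall>z\<in>F. rk z y" by auto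
  show ?case
  proof (cases "rk x y")
    case True then show ?thesis using y insert.prems rk_refl by auto
  next
    case False
    have vx: "VV x" "\<forall>z\<in>F. VV z" using insert.prems by auto
    then have yx: "rk y x" using rk_total y(1) False by blast
    have "\<forall>z\<in>insert x F. rk z x"
    proof
      fix z assume "z \<in> insert x F"
      then show "rk z x"
      proof
        assume "z = x" then show ?thesis using rk_refl vx by simp
      next
        assume "z \<in> F" then show ?thesis using rk_trans[of z y x] y vx yx by blast
      qed
    qed
    then show ?thesis by blast
  qed
qed

lemma vars_valid: "p \<in> dring m l \<Longrightarrow> x \<in> vars p \<Longrightarrow> VV x"
  unfolding dring_def by blast

lemma leader_props:
  assumes "p \<in> dring m l" "vars p \<noteq> {}"
  shows "leader rk p \<in> vars p" "\<forall>v\<in>vars p. rk v (leader rk p)"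
proof -
  obtain x where x: "x \<in> vars p" "\<forall>y\<in>vars p. rk y x"
    using exists_max[OF finite_vars assms(2)] vars_valid[OF assms(1)] by blast
  have "leader rk p = x" unfolding leader_def
  proof (rule the_equality)
    show "x \<in> vars p \<and> (\<forall>v\<in>vars p. rk v x)" using x by blast
    fix u assume "u \<in> vars p \<and> (\<forall>v\<in>vars p. rk v u)"
    then show "u = x" using x rk_antisym vars_valid[OF assms(1)] by blast
  qed
  then show "leader rk p \<in> vars p" "\<forall>v\<in>vars p. rk v (leader rk p)" using x by auto
qed

lemma leader_valid: "p \<in> dring m l \<Longrightarrow> vars p \<noteq> {} \<Longrightarrow> VV (leader rk p)"
  using leader_props vars_valid by blast

section \<open>Structure of derivatives of a polynomial\<close>

definition Inv :: "'k::comm_ring_1 dpoly \<Rightarrow> 'k dpoly \<Rightarrow> dop \<Rightarrow> bool" where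
  "Inv p q \<theta>' \<longleftrightarrow> valid_op m \<theta>' \<and> (\<forall>x\<in>vars q. VV x) \<and>
     ((\<theta>' = 0 \<and> q = p) \<or>
      (\<theta>' \<noteq> 0 \<and> (\<exists>T. q = separant rk p * pvar (apply_op_var \<theta>' (leader rk p)) + T \<and>
          (\<forall>x\<in>vars T. VV x \<and> rk_less rk x (apply_op_var \<theta>' (leader rk p))))))"

lemma Inv_start: "p \<in> dring m l \<Longrightarrow> Inv p p 0"
  unfolding Inv_def using vars_valid by (auto simp: valid_op_def)

lemma Inv_step:
  fixes p :: "'k::comm_ring_1 dpoly"
  assumes p: "p \<in> dring m l" "vars p \<noteq> {}" and I: "Inv p q \<theta>'" and i: "i < m"
  shows "Inv p (dderiv d i q) (sng i 1 + \<theta>')"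
proof -
  define u where "u = leader rk p"
  define S where "S = separant rk p"
  have S_def': "S = pderiv_var u p" unfolding S_def u_def separant_def ..
  have u: "u \<in> vars p" "\<forall>v\<in>vars p. rk v u" "VV u" using leader_props[OF p] vars_valid[OF p(1)] unfolding u_def by auto
  have vp: "\<forall>x\<in>vars p. VV x" using vars_valid[OF p(1)] by blast
  have vS: "\<forall>x\<in>vars S. VV x \<and> rk x u" using vars_pderiv[of u p] u vp unfolding S_def' by blast
  have th': "valid_op m \<theta>'" and vq: "\<forall>x\<in>vars q. VV x" using I unfolding Inv_def by auto
  define w where "w = apply_op_var \<theta>' u"
  have vw: "VV w" unfolding w_def using valid_apply th' u(3) by blast
  have uw: "rk u w" unfolding w_def using rk_deriv th' u(3) by blast
  have new_w: "apply_op_var (sng i 1 + \<theta>') u = dv i w" unfolding w_def apply_op_var_add ..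
  have vdw: "VV (dv i w)" using valid_dv[OF i vw] .
  have wdw: "rk_less rk w (dv i w)" using rk_less_dv[OF i vw] .
  have valid_new: "valid_op m (sng i 1 + \<theta>')" using th' i by (simp add: valid_op_add valid_op_single)
  have nz: "sng i 1 + \<theta>' \<noteq> 0"
  proof
    assume A: "sng i 1 + \<theta>' = 0"
    have "lk (sng i 1 + \<theta>') i = lk (0::dop) i" by (simp only: A)
    then show False by (simp add: lookup_add)
  qed
  have vdd: "\<forall>x\<in>vars (dderiv d i q). VV x"
  proof
    fix x assume "x \<in> vars (dderiv d i q)"
    then have "x \<in> vars q \<or> (\<exists>y\<in>vars q. x = dv i y)" using vars_dderiv[of d i q] by blast
    then show "VV x" using vq valid_dv[OF i] by blast
  qed
  have key: "\<exists>T. dderiv d i q = S * pvar (dv i w) + T \<and> (\<forall>x\<in>vars T. VV x \<and> rk_less rk x (dv i w))"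
    if pq: "pderiv_var w q = S" and le: "\<forall>x\<in>vars q. rk x w"
  proof -
    define T where "T = dcoef d i q + (\<Sum>x\<in>vars q - {w}. pderiv_var x q * pvar (dv i x))"
    have "dderiv d i q = S * pvar (dv i w) + T" unfolding T_def using dderiv_split[of d i q w] pq by simp
    moreover have "\<forall>x\<in>vars T. VV x \<and> rk_less rk x (dv i w)"
    proof
      fix x assume "x \<in> vars T"
      then have "x \<in> vars q \<union> dv i ` (vars q - {w})" using vars_dderiv_rest unfolding T_def by blast
      then show "VV x \<and> rk_less rk x (dv i w)"
      proof
        assume "x \<in> vars q"
        then show ?thesis using vq le rk_le_less_trans[OF _ vw vdw _ wdw] by blast
      next
        assume "x \<in> dv i ` (vars q - {w})"
        then obtain y where y: "y \<in> vars q" "y \<noteq> w" "x = dv i y" by blast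
        have "rk_less rk y w" using y le unfolding rk_less_def by blast
        then show ?thesis using rk_less_mono[OF valid_op_single[OF i] vw _] vq y valid_dv[OF i] by blast
      qed
    qed
    ultimately show ?thesis by blast
  qed
  from I have "(\<theta>' = 0 \<and> q = p) \<or> (\<theta>' \<noteq> 0 \<and> (\<exists>T. q = S * pvar w + T \<and> (\<forall>x\<in>vars T. VV x \<and> rk_less rk x w)))"
    unfolding Inv_def S_def w_def u_def by blast
  then have "\<exists>T. dderiv d i q = S * pvar (dv i w) + T \<and> (\<forall>x\<in>vars T. VV x \<and> rk_less rk x (dv i w))"
  proof
    assume A: "\<theta>' = 0 \<and> q = p"
    then have "w = u" unfolding w_def by simp
    then show ?thesis using key A u(2) S_def' by blast
  next
    assume "\<theta>' \<noteq> 0 \<and> (\<exists>T. q = S * pvar w + T \<and> (\<forall>x\<in>vars T. VV x \<and> rk_less rk x w))"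
    then obtain T where T: "\<theta>' \<noteq> 0" "q = S * pvar w + T" "\<forall>x\<in>vars T. VV x \<and> rk_less rk x w" by blast
    have uw': "rk_less rk u w" unfolding w_def using rk_less_deriv[OF th' T(1) u(3)] .
    have Sw: "\<forall>x\<in>vars S. rk_less rk x w" using vS rk_le_less_trans[OF _ u(3) vw _ uw'] by blast
    have "w \<notin> vars S" "w \<notin> vars T" using Sw T(3) unfolding rk_less_def by auto
    then have "pderiv_var w q = S" using T(2) pderiv_linear_form by blast
    moreover have "\<forall>x\<in>vars q. rk x w"
    proof
      fix x assume "x \<in> vars q"
      then have "x \<in> vars S \<or> x = w \<or> x \<in> vars T"
        using T(2) vars_add[of "S * pvar w" T] vars_mult[of S "pvar w"] by (auto simp: vars_pvar)
      then show "rk x w" using Sw T(3) rk_refl[OF vw] unfolding rk_less_def by blast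
    qed
    ultimately show ?thesis using key by blast
  qed
  then obtain T where T: "dderiv d i q = S * pvar (dv i w) + T" "\<forall>x\<in>vars T. VV x \<and> rk_less rk x (dv i w)"
    by blast
  show ?thesis unfolding Inv_def
  proof (intro conjI disjI2 valid_new vdd nz exI[of _ T])
    show "dderiv d i q = separant rk p * pvar (apply_op_var (sng i 1 + \<theta>') (leader rk p)) + T"
      using T(1) new_w unfolding S_def u_def by simp
    show "\<forall>x\<in>vars T. VV x \<and> rk_less rk x (apply_op_var (sng i 1 + \<theta>') (leader rk p))"
      using T(2) new_w unfolding u_def by simp
  qed
qed

lemma Inv_pow:
  fixes p :: "'k::comm_ring_1 dpoly"
  assumes p: "p \<in> dring m l" "vars p \<noteq> {}" and I: "Inv p q \<theta>'" and i: "i < m"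
  shows "Inv p ((dderiv d i ^^ n) q) (sng i n + \<theta>')"
proof (induction n)
  case 0 then show ?case using I by simp
next
  case (Suc n)
  have "sng i (Suc n) + \<theta>' = sng i 1 + (sng i n + \<theta>')"
    by (simp add: single_add[symmetric] add.assoc[symmetric])
  then show ?case using Inv_step[OF p Suc i] by simp
qed

lemma Inv_foldr:
  fixes p :: "'k::comm_ring_1 dpoly"
  assumes p: "p \<in> dring m l" "vars p \<noteq> {}" and xs: "set xs \<subseteq> {..<m}"
  shows "Inv p (List.foldr (\<lambda>i q. (dderiv d i ^^ lk \<theta> i) q) xs p) (sum_list (map (\<lambda>i. sng i (lk \<theta> i)) xs))"
  using xs
proof (induction xs)
  case Nil then show ?case using Inv_start[OF p(1)] by simp
next
  case (Cons i xs)
  then have "Inv p (List.foldr (\<lambda>i q. (dderiv d i ^^ lk \<theta> i) q) xs p) (sum_list (map (\<lambda>i. sng i (lk \<theta> i)) xs))"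
    "i < m" by auto
  from Inv_pow[OF p this, where n="lk \<theta> i"] show ?case by simp
qed

lemma sum_list_singles:
  assumes "valid_op m \<theta>"
  shows "sum_list (map (\<lambda>i. sng i (lk \<theta> i)) [0..<m]) = \<theta>"
proof (rule poly_mapping_eqI)
  fix k
  have "sum_list (map (\<lambda>i. sng i (lk \<theta> i)) [0..<m]) = (\<Sum>i\<in>{0..<m}. sng i (lk \<theta> i))"
    by (simp add: sum_list_distinct_conv_sum_set)
  then have "lk (sum_list (map (\<lambda>i. sng i (lk \<theta> i)) [0..<m])) k = (\<Sum>i\<in>{0..<m}. if i = k then lk \<theta> i else 0)"
    by (simp add: lookup_sum lookup_single when_def)
  also have "\<dots> = lk \<theta> k" using assms unfolding valid_op_def by (auto simp: in_keys_iff)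
  finally show "lk (sum_list (map (\<lambda>i. sng i (lk \<theta> i)) [0..<m])) k = lk \<theta> k" .
qed

lemma apply_op_Inv:
  fixes p :: "'k::comm_ring_1 dpoly"
  assumes p: "p \<in> dring m l" "vars p \<noteq> {}" and th: "valid_op m \<theta>"
  shows "Inv p (apply_op d m \<theta> p) \<theta>"
proof -
  have "set [0..<m] \<subseteq> {..<m}" by auto
  from Inv_foldr[OF p this, where d=d and \<theta>=\<theta>] show ?thesis
    using sum_list_singles[OF th] unfolding apply_op_def by simp
qed

lemma apply_op_struct:
  fixes p :: "'k::comm_ring_1 dpoly"
  assumes p: "p \<in> dring m l" "vars p \<noteq> {}" and th: "valid_op m \<theta>" "\<theta> \<noteq> 0"
  shows "\<exists>T. apply_op d m \<theta> p = separant rk p * pvar (apply_op_var \<theta> (leader rk p)) + T \<and>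
          (\<forall>x\<in>vars T. VV x \<and> rk_less rk x (apply_op_var \<theta> (leader rk p)))"
  using apply_op_Inv[OF p th(1), where d=d] th(2) unfolding Inv_def by blast

lemma apply_op_vars:
  fixes p :: "'k::comm_ring_1 dpoly"
  assumes p: "p \<in> dring m l" "vars p \<noteq> {}" and th: "valid_op m \<theta>"
  shows "\<forall>x\<in>vars (apply_op d m \<theta> p). VV x \<and> rk x (apply_op_var \<theta> (leader rk p))"
proof
  fix x assume x: "x \<in> vars (apply_op d m \<theta> p)"
  define u where "u = leader rk p"
  have u: "\<forall>v\<in>vars p. rk v u" "VV u" using leader_props[OF p] vars_valid[OF p(1)] unfolding u_def by auto
  have vx: "VV x" using apply_op_Inv[OF p th, where d=d] x unfolding Inv_def by blast
  have vw: "VV (apply_op_var \<theta> u)" using valid_apply[OF th u(2)] .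
  have uw: "rk u (apply_op_var \<theta> u)" using rk_deriv[OF th u(2)] .
  show "VV x \<and> rk x (apply_op_var \<theta> (leader rk p))"
  proof (cases "\<theta> = 0")
    case True
    then have "apply_op d m \<theta> p = p" using apply_op_Inv[OF p th, where d=d] unfolding Inv_def by blast
    then show ?thesis using x u vx True unfolding u_def by simp
  next
    case False
    from apply_op_struct[OF p th False, where d=d] obtain T where
      T: "apply_op d m \<theta> p = separant rk p * pvar (apply_op_var \<theta> u) + T"
         "\<forall>x\<in>vars T. VV x \<and> rk_less rk x (apply_op_var \<theta> u)" unfolding u_def by blast
    have vS: "vars (separant rk p) \<subseteq> vars p" unfolding separant_def by (rule vars_pderiv)
    have "x \<in> vars p \<or> x = apply_op_var \<theta> u \<or> x \<in> vars T"
      using x T(1) vars_add[of "separant rk p * pvar (apply_op_var \<theta> u)" T]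
        vars_mult[of "separant rk p" "pvar (apply_op_var \<theta> u)"] vS by (auto simp: vars_pvar)
    moreover have "rk x (apply_op_var \<theta> u)" if "x \<in> vars p"
      using rk_trans[OF _ u(2) vw] vars_valid[OF p(1) that] u(1) that uw by blast
    moreover have "rk x (apply_op_var \<theta> u)" if "x \<in> vars T"
      using T(2) that unfolding rk_less_def by blast
    ultimately have "rk x (apply_op_var \<theta> u)" using rk_refl[OF vw] by blast
    then show ?thesis using vx unfolding u_def by blast
  qed
qed

end



lemma ideal_gen_ideal:
  fixes S G :: "'a::comm_ring_1 set"
  assumes "0 \<in> S" "\<And>a b. a \<in> S \<Longrightarrow> b \<in> S \<Longrightarrow> a + b \<in> S" "\<And>a b. a \<in> S \<Longrightarrow> b \<in> S \<Longrightarrow> a * b \<in> S" "G \<subseteq> S"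
  shows "is_ideal_in S (ideal_gen S G)"
proof -
  have SS: "is_ideal_in S S" unfolding is_ideal_in_def using assms by blast
  let ?F = "{J. G \<subseteq> J \<and> is_ideal_in S J}"
  have "\<Inter> ?F \<subseteq> S" using SS assms(4) by blast
  moreover have "0 \<in> \<Inter> ?F" unfolding is_ideal_in_def by blast
  moreover have "\<forall>a\<in>\<Inter> ?F. \<forall>b\<in>\<Inter> ?F. a + b \<in> \<Inter> ?F"
    unfolding is_ideal_in_def by blast
  moreover have "\<forall>a\<in>\<Inter> ?F. \<forall>r\<in>S. r * a \<in> \<Inter> ?F"
    unfolding is_ideal_in_def by blast
  ultimately show ?thesis unfolding is_ideal_in_def ideal_gen_def by blast
qed

lemma ideal_gen_sup: "G \<subseteq> ideal_gen S G"
  unfolding ideal_gen_def by blast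

lemma ideal_gen_least: "is_ideal_in S K \<Longrightarrow> G \<subseteq> K \<Longrightarrow> ideal_gen S G \<subseteq> K"
  unfolding ideal_gen_def by blast

lemma ideal_add: "is_ideal_in S K \<Longrightarrow> a \<in> K \<Longrightarrow> b \<in> K \<Longrightarrow> a + b \<in> K"
  unfolding is_ideal_in_def by blast

lemma ideal_mult: "is_ideal_in S K \<Longrightarrow> a \<in> K \<Longrightarrow> r \<in> S \<Longrightarrow> r * a \<in> K"
  unfolding is_ideal_in_def by blast

lemma ideal_sub: "is_ideal_in S K \<Longrightarrow> a \<in> K \<Longrightarrow> S \<subseteq> S"
  by simp

lemma ideal_diff: "is_ideal_in S K \<Longrightarrow> - 1 \<in> S \<Longrightarrow> a \<in> K \<Longrightarrow> b \<in> K \<Longrightarrow> a - b \<in> K"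
  unfolding is_ideal_in_def by (metis diff_conv_add_uminus mult_minus1)

lemma ideal_zero: "is_ideal_in S K \<Longrightarrow> 0 \<in> K"
  unfolding is_ideal_in_def by blast

lemma ideal_subset: "is_ideal_in S K \<Longrightarrow> K \<subseteq> S"
  unfolding is_ideal_in_def by blast

lemma dring_iff: "p \<in> dring m l \<longleftrightarrow> (\<forall>x\<in>vars p. valid_var m l x)"
  unfolding dring_def by simp

lemma dring_h_iff: "p \<in> dring_h m l h \<longleftrightarrow> (\<forall>x\<in>vars p. valid_var m l x \<and> var_ord x \<le> h)"
  unfolding dring_h_def dring_def by auto

definition VC :: "(dvar \<Rightarrow> bool) \<Rightarrow> 'k::comm_ring_1 dpoly set" where
  "VC P = {p. \<forall>x\<in>vars p. P x}"

lemma dring_VC: "dring m l = VC (valid_var m l)"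
  unfolding VC_def dring_def ..

lemma dring_h_VC: "dring_h m l h = VC (\<lambda>x. valid_var m l x \<and> var_ord x \<le> h)"
  by (rule set_eqI) (simp add: VC_def dring_h_iff)

lemma VC_add: "p \<in> VC P \<Longrightarrow> q \<in> VC P \<Longrightarrow> p + q \<in> VC P"
  unfolding VC_def using vars_add by blast
lemma VC_diff: "p \<in> VC P \<Longrightarrow> q \<in> VC P \<Longrightarrow> p - q \<in> VC P"
  unfolding VC_def using vars_diff by blast
lemma VC_mult: "p \<in> VC P \<Longrightarrow> q \<in> VC P \<Longrightarrow> p * q \<in> VC P"
  unfolding VC_def using vars_mult by blast
lemma VC_uminus: "p \<in> VC P \<Longrightarrow> - p \<in> VC P"
  unfolding VC_def using vars_uminus by blast
lemma VC_power: "p \<in> VC P \<Longrightarrow> p ^ n \<in> VC P"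
  unfolding VC_def using vars_power by blast
lemma VC_const: "sng 0 c \<in> VC P"
  unfolding VC_def using vars_const by blast
lemma VC_zero: "0 \<in> VC P" unfolding VC_def by simp
lemma VC_one: "1 \<in> VC P" unfolding VC_def by simp
lemma VC_prod_list: "(\<And>a. a \<in> set xs \<Longrightarrow> f a \<in> VC P) \<Longrightarrow> prod_list (map f xs) \<in> VC P"
  unfolding VC_def using vars_prod_list by blast
lemma VC_mono: "p \<in> VC P \<Longrightarrow> (\<And>x. P x \<Longrightarrow> Q x) \<Longrightarrow> p \<in> VC Q"
  unfolding VC_def by blast
lemma VC_vars: "vars p \<subseteq> vars q \<Longrightarrow> q \<in> VC P \<Longrightarrow> p \<in> VC P"
  unfolding VC_def by blast

lemma VC_ideal: "is_ideal_in (VC P) K \<Longrightarrow> a \<in> K \<Longrightarrow> b \<in> K \<Longrightarrow> a - b \<in> K"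
  by (rule ideal_diff) (auto intro: VC_uminus VC_one)

lemma dring_h_sub: "dring_h m l h \<subseteq> dring m l"
  unfolding dring_h_def by blast

lemma op_ord_superset: "finite A \<Longrightarrow> ks \<theta> \<subseteq> A \<Longrightarrow> op_ord \<theta> = (\<Sum>i\<in>A. lk \<theta> i)"
  unfolding op_ord_def by (intro sum.mono_neutral_left) (auto simp: in_keys_iff)

lemma op_ord_add: "op_ord (a + b) = op_ord a + op_ord b"
proof -
  let ?A = "ks a \<union> ks b"
  have "op_ord (a + b) = (\<Sum>i\<in>?A. lk (a + b) i)" by (rule op_ord_superset) (auto simp: keys_add_nat)
  also have "\<dots> = (\<Sum>i\<in>?A. lk a i) + (\<Sum>i\<in>?A. lk b i)" by (simp add: lookup_add sum.distrib)
  also have "\<dots> = op_ord a + op_ord b" by (simp add: op_ord_superset[of ?A a] op_ord_superset[of ?A b])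
  finally show ?thesis .
qed

lemma var_ord_apply: "var_ord (apply_op_var \<theta> u) = op_ord \<theta> + var_ord u"
  unfolding var_ord_def apply_op_var_def by (simp add: op_ord_add)

lemma lookup_le_op_ord: "lk \<theta> i \<le> op_ord \<theta>"
proof (cases "i \<in> ks \<theta>")
  case True then show ?thesis unfolding op_ord_def by (intro member_le_sum) auto
next
  case False then show ?thesis by (simp add: in_keys_iff)
qed

lemma finite_ops: "finite {\<theta>. valid_op m \<theta> \<and> op_ord \<theta> \<le> h}"
proof -
  let ?A = "{\<theta>. valid_op m \<theta> \<and> op_ord \<theta> \<le> h}"
  let ?f = "\<lambda>\<theta>. map (lk \<theta>) [0..<m]"
  have "?f ` ?A \<subseteq> {xs. set xs \<subseteq> {..h} \<and> length xs = m}"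
    using lookup_le_op_ord order.trans by fastforce
  then have fin: "finite (?f ` ?A)" using finite_lists_length_eq[of "{..h}" m] finite_subset by blast
  have "inj_on ?f ?A"
  proof
    fix a b assume ab: "a \<in> ?A" "b \<in> ?A" "?f a = ?f b"
    show "a = b"
    proof (rule poly_mapping_eqI)
      fix i show "lk a i = lk b i"
      proof (cases "i < m")
        case True then show ?thesis using ab(3) by (metis map_eq_conv atLeastLessThan_iff set_upt zero_le)
      next
        case False then have "i \<notin> ks a" "i \<notin> ks b" using ab(1,2) unfolding valid_op_def by auto
        then show ?thesis by (simp add: in_keys_iff)
      qed
    qed
  qed
  then show ?thesis using finite_imageD[OF fin] by blast
qed

lemma finite_Vh: "finite {x. valid_var m l x \<and> var_ord x \<le> h}"
proof -
  have "{x. valid_var m l x \<and> var_ord x \<le> h} \<subseteq> {\<theta>. valid_op m \<theta> \<and> op_ord \<theta> \<le> h} \<times> {..<l}"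
    unfolding valid_var_def var_ord_def by auto
  then show ?thesis using finite_ops finite_subset by blast
qed

lemma apply_op_zero: "apply_op d m 0 p = p"
proof -
  have "List.foldr (\<lambda>i. dderiv d i ^^ lk (0::dop) i) xs p = p" for xs
    by (induction xs) auto
  then show ?thesis unfolding apply_op_def by simp
qed

lemma diff_ideal_apply_op:
  assumes "is_diff_ideal d m l J" "c \<in> J"
  shows "apply_op d m \<theta> c \<in> J"
proof -
  have pw: "(dderiv d i ^^ n) q \<in> J" if "q \<in> J" "i < m" for i n q
    using that assms(1) unfolding is_diff_ideal_def by (induction n) auto
  have "set xs \<subseteq> {..<m} \<Longrightarrow> List.foldr (\<lambda>i q. (dderiv d i ^^ lk \<theta> i) q) xs c \<in> J" for xs
    by (induction xs) (auto intro: pw assms(2))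
  moreover have "set [0..<m] \<subseteq> {..<m}" by auto
  ultimately show ?thesis unfolding apply_op_def by blast
qed

context RK begin

lemma orderly_le: "is_orderly m l rk \<Longrightarrow> VV x \<Longrightarrow> VV w \<Longrightarrow> rk x w \<Longrightarrow> var_ord x \<le> var_ord w"
  unfolding is_orderly_def rk_less_def using rk_antisym by (meson not_le)

end



lemma prod_list_factor:
  fixes f :: "'a \<Rightarrow> 'b::comm_monoid_mult"
  shows "x \<in> set xs \<Longrightarrow> \<exists>ys. set ys \<subseteq> set xs \<and> prod_list (map f xs) = f x * prod_list (map f ys)"
proof (induction xs)
  case (Cons y xs)
  show ?case
  proof (cases "x = y")
    case True then show ?thesis by (intro exI[of _ xs]) auto
  next
    case False
    then obtain ys where "set ys \<subseteq> set xs" "prod_list (map f xs) = f x * prod_list (map f ys)"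
      using Cons by auto
    then show ?thesis by (intro exI[of _ "y # ys"]) (auto simp: ac_simps)
  qed
qed simp

lemma vars_initial: "vars (initial rk p) \<subseteq> vars p - {leader rk p}"
  unfolding initial_def lcoeff_cpart by (rule vars_cpart)

lemma vars_separant: "vars (separant rk p) \<subseteq> vars p"
  unfolding separant_def by (rule vars_pderiv)

locale MAIN = RK m l rk for m l :: nat and rk +
  fixes d :: "nat \<Rightarrow> 'k::field_char_0 \<Rightarrow> 'k" and h :: nat and C :: "'k dpoly list"
  assumes df: "diff_field d m" and orderly: "is_orderly m l rk"
    and charz: "characterizable d m l rk (char_ideal d m l rk C)"
    and kcs: "kolchin_char_set m l rk (char_ideal d m l rk C) C"
    and ob: "order_bound h C"
begin

abbreviation "J \<equiv> char_ideal d m l rk C"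
abbreviation "H \<equiv> H_of rk C"
abbreviation "Rh \<equiv> (dring_h m l h :: 'k dpoly set)"
abbreviation "R \<equiv> (dring m l :: 'k dpoly set)"
abbreviation "ld k \<equiv> leader rk (C ! k)"

definition Gset :: "'k dpoly set" where
  "Gset = {apply_op d m \<theta> (C ! j) | \<theta> j. j < length C \<and> valid_op m \<theta> \<and>
            var_ord (apply_op_var \<theta> (leader rk (C ! j))) \<le> h}"

abbreviation "Idl \<equiv> ideal_gen Rh Gset"

lemma trunc_def': "truncated_ideal d m l rk h C = saturation Rh Idl H"
  unfolding truncated_ideal_def Gset_def ..

lemma J_diff: "is_diff_ideal d m l J"
  using charz unfolding characterizable_def by blast

lemma J_ideal: "is_ideal_in R J"
  using J_diff unfolding is_diff_ideal_def by blast

lemma J_sub: "J \<subseteq> R" using ideal_subset[OF J_ideal] .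

lemma J_diff': "a \<in> J \<Longrightarrow> b \<in> J \<Longrightarrow> a - b \<in> J"
  using VC_ideal[of "valid_var m l"] J_ideal unfolding dring_VC by blast

lemma J_mult: "a \<in> J \<Longrightarrow> r \<in> R \<Longrightarrow> r * a \<in> J"
  using ideal_mult[OF J_ideal] by blast

lemma C_J: "set C \<subseteq> J" using kcs unfolding kolchin_char_set_def by blast

lemma aut: "autoreduced m l rk C" using kcs unfolding kolchin_char_set_def by blast

lemma C_R: "c \<in> set C \<Longrightarrow> c \<in> R" using aut unfolding autoreduced_def by blast
lemma C_nc: "c \<in> set C \<Longrightarrow> vars c \<noteq> {}" using aut unfolding autoreduced_def by blast

lemma C_Rh: "c \<in> set C \<Longrightarrow> c \<in> Rh"
  using C_R ob unfolding order_bound_def dring_h_def by blast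

lemma ld_props:
  assumes "k < length C"
  shows "ld k \<in> vars (C ! k)" "\<forall>v\<in>vars (C ! k). rk v (ld k)" "VV (ld k)"
  using leader_props[OF C_R C_nc] leader_valid[OF C_R C_nc] assms by auto

lemma Rh_VV: "p \<in> Rh \<Longrightarrow> x \<in> vars p \<Longrightarrow> VV x \<and> var_ord x \<le> h"
  unfolding dring_h_iff by blast

lemma ld_ord: "k < length C \<Longrightarrow> var_ord (ld k) \<le> h"
  using Rh_VV[OF C_Rh[OF nth_mem] ld_props(1)] by blast

lemma VC_Rh: "Rh = VC (\<lambda>x. VV x \<and> var_ord x \<le> h)" by (rule dring_h_VC)

lemma Rh_add: "a \<in> Rh \<Longrightarrow> b \<in> Rh \<Longrightarrow> a + b \<in> Rh" unfolding VC_Rh by (rule VC_add)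
lemma Rh_diff: "a \<in> Rh \<Longrightarrow> b \<in> Rh \<Longrightarrow> a - b \<in> Rh" unfolding VC_Rh by (rule VC_diff)
lemma Rh_mult: "a \<in> Rh \<Longrightarrow> b \<in> Rh \<Longrightarrow> a * b \<in> Rh" unfolding VC_Rh by (rule VC_mult)
lemma Rh_power: "a \<in> Rh \<Longrightarrow> a ^ n \<in> Rh" unfolding VC_Rh by (rule VC_power)
lemma Rh_zero: "0 \<in> Rh" unfolding VC_Rh by (rule VC_zero)
lemma Rh_one: "1 \<in> Rh" unfolding VC_Rh by (rule VC_one)
lemma Rh_R: "a \<in> Rh \<Longrightarrow> a \<in> R" using dring_h_sub by blast

lemma R_mult: "a \<in> R \<Longrightarrow> b \<in> R \<Longrightarrow> a * b \<in> R" unfolding dring_VC by (rule VC_mult)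
lemma R_power: "a \<in> R \<Longrightarrow> a ^ n \<in> R" unfolding dring_VC by (rule VC_power)

lemma G_Rh: "Gset \<subseteq> Rh"
proof
  fix g assume "g \<in> Gset"
  then obtain \<theta> j where g: "g = apply_op d m \<theta> (C ! j)" "j < length C" "valid_op m \<theta>"
    "var_ord (apply_op_var \<theta> (ld j)) \<le> h" unfolding Gset_def by blast
  have cj: "C ! j \<in> R" "vars (C ! j) \<noteq> {}" using C_R C_nc g(2) by auto
  have vw: "VV (apply_op_var \<theta> (ld j))" using valid_apply[OF g(3) ld_props(3)[OF g(2)]] .
  show "g \<in> Rh" unfolding dring_h_iff
  proof
    fix x assume "x \<in> vars g"
    then have "VV x \<and> rk x (apply_op_var \<theta> (ld j))" using apply_op_vars[OF cj g(3)] g(1) by blast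
    then show "VV x \<and> var_ord x \<le> h" using orderly_le[OF orderly _ vw] g(4) by fastforce
  qed
qed

lemma G_J: "Gset \<subseteq> J"
proof
  fix g assume "g \<in> Gset"
  then obtain \<theta> j where g: "g = apply_op d m \<theta> (C ! j)" "j < length C" unfolding Gset_def by blast
  then have "C ! j \<in> J" using C_J nth_mem by blast
  then show "g \<in> J" using diff_ideal_apply_op[OF J_diff] g(1) by blast
qed

lemma Idl_ideal: "is_ideal_in Rh Idl"
  by (rule ideal_gen_ideal) (auto intro: Rh_zero Rh_add Rh_mult G_Rh[THEN subsetD])

lemma G_Id: "Gset \<subseteq> Idl" by (rule ideal_gen_sup)

lemma Idl_add: "a \<in> Idl \<Longrightarrow> b \<in> Idl \<Longrightarrow> a + b \<in> Idl" using ideal_add[OF Idl_ideal] .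
lemma Idl_mult: "a \<in> Idl \<Longrightarrow> r \<in> Rh \<Longrightarrow> r * a \<in> Idl" using ideal_mult[OF Idl_ideal] .
lemma Idl_diff: "a \<in> Idl \<Longrightarrow> b \<in> Idl \<Longrightarrow> a - b \<in> Idl"
  using VC_ideal Idl_ideal unfolding VC_Rh by blast
lemma Idl_Rh: "a \<in> Idl \<Longrightarrow> a \<in> Rh" using ideal_subset[OF Idl_ideal] by blast

lemma init_Rh: "c \<in> set C \<Longrightarrow> initial rk c \<in> Rh"
  using C_Rh vars_initial unfolding VC_Rh by (meson VC_vars Diff_subset order.trans)
lemma sep_Rh: "c \<in> set C \<Longrightarrow> separant rk c \<in> Rh"
  using C_Rh vars_separant unfolding VC_Rh by (meson VC_vars)

lemma H_Rh: "H \<in> Rh"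
  unfolding H_of_def VC_Rh
  by (rule VC_prod_list) (use init_Rh sep_Rh Rh_mult in \<open>auto simp: VC_Rh\<close>)

lemma H_factor:
  assumes "c \<in> set C"
  shows "\<exists>X\<in>Rh. H = initial rk c * X" "\<exists>X\<in>Rh. H = separant rk c * X"
proof -
  obtain ys where ys: "set ys \<subseteq> set C" "H = (initial rk c * separant rk c) * prod_list (map (\<lambda>c. initial rk c * separant rk c) ys)"
    using prod_list_factor[OF assms, of "\<lambda>c. initial rk c * separant rk c"] unfolding H_of_def by blast
  have P: "prod_list (map (\<lambda>c. initial rk c * separant rk c) ys) \<in> Rh"
    unfolding VC_Rh by (rule VC_prod_list) (use init_Rh sep_Rh Rh_mult ys(1) in \<open>auto simp: VC_Rh\<close>)
  show "\<exists>X\<in>Rh. H = initial rk c * X"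
    using ys(2) P sep_Rh[OF assms] Rh_mult by (intro bexI[of _ "separant rk c * prod_list (map (\<lambda>c. initial rk c * separant rk c) ys)"]) (auto simp: ac_simps)
  show "\<exists>X\<in>Rh. H = separant rk c * X"
    using ys(2) P init_Rh[OF assms] Rh_mult by (intro bexI[of _ "initial rk c * prod_list (map (\<lambda>c. initial rk c * separant rk c) ys)"]) (auto simp: ac_simps)
qed

end



lemma bnd0_notin: "bnd v 0 r \<Longrightarrow> v \<notin> vars r"
  unfolding bnd_def vars_def by (auto simp: in_keys_iff)

lemma not_proper_self: "\<not> is_proper_derivative x x"
  unfolding is_proper_derivative_def using apply_op_var_self by metis

context MAIN begin

lemma reduced_C: "i < length C \<Longrightarrow> j < length C \<Longrightarrow> i \<noteq> j \<Longrightarrow> reduced_wrt rk (C ! i) (C ! j)"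
  using aut unfolding autoreduced_def by blast

lemma ld_inj: "i < length C \<Longrightarrow> j < length C \<Longrightarrow> ld i = ld j \<Longrightarrow> i = j"
  using reduced_C[of i j] reduced_C[of j i] unfolding reduced_wrt_def by fastforce

lemma ld_not_proper: "k < length C \<Longrightarrow> k' < length C \<Longrightarrow> \<not> is_proper_derivative (ld k) (ld k')"
  using reduced_C[of k k'] ld_props(1)[of k] not_proper_self unfolding reduced_wrt_def by metis

definition bad :: "'k dpoly \<Rightarrow> dvar set" where
  "bad f = {w \<in> vars f. (\<exists>k<length C. is_proper_derivative w (ld k)) \<or>
                       (\<exists>k<length C. w = ld k \<and> deg_in (ld k) (C ! k) \<le> deg_in w f)}"

lemma bad_sub: "bad f \<subseteq> vars f" unfolding bad_def by blast

lemma bad_empty: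
  assumes "bad f = {}" "k < length C"
  shows "reduced_wrt rk f (C ! k)"
  unfolding reduced_wrt_def
proof
  show "\<forall>v\<in>vars f. \<not> is_proper_derivative v (ld k)"
    using assms unfolding bad_def by blast
  show "deg_in (ld k) f < deg_in (ld k) (C ! k)"
  proof (cases "ld k \<in> vars f")
    case True then show ?thesis using assms unfolding bad_def by fastforce
  next
    case False then show ?thesis using deg_in_notin[OF False] deg_in_pos[OF ld_props(1)[OF assms(2)]] by simp
  qed
qed

lemma J_sat: "J = saturation R (diff_ideal_gen d m l (set C)) H"
  unfolding char_ideal_def ..

end


section \<open>Evaluation\<close>

definition mon :: "(dvar \<Rightarrow> 'k::comm_ring_1) \<Rightarrow> (dvar \<Rightarrow>\<^sub>0 nat) \<Rightarrow> 'k" where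
  "mon val M = (\<Prod>x\<in>ks M. val x ^ lk M x)"

definition evalp :: "(dvar \<Rightarrow> 'k::comm_ring_1) \<Rightarrow> 'k dpoly \<Rightarrow> 'k" where
  "evalp val p = lin (\<lambda>M c. c * mon val M) p"

lemma mon_superset: "finite A \<Longrightarrow> ks M \<subseteq> A \<Longrightarrow> mon val M = (\<Prod>x\<in>A. val x ^ lk M x)"
  unfolding mon_def by (intro prod.mono_neutral_left) (auto simp: in_keys_iff)

lemma mon_zero[simp]: "mon val 0 = 1" unfolding mon_def by simp

lemma mon_var: "mon val (sng v (Suc 0)) = val v"
  unfolding mon_def by simp

lemma mon_add: "mon val (M + N) = mon val M * mon val N"
proof -
  let ?A = "ks M \<union> ks N"
  have "mon val (M + N) = (\<Prod>x\<in>?A. val x ^ lk (M + N) x)" by (rule mon_superset) (auto simp: keys_add_nat)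
  also have "\<dots> = (\<Prod>x\<in>?A. val x ^ lk M x) * (\<Prod>x\<in>?A. val x ^ lk N x)"
    by (simp add: lookup_add power_add prod.distrib)
  also have "\<dots> = mon val M * mon val N" by (simp add: mon_superset[of ?A M] mon_superset[of ?A N])
  finally show ?thesis .
qed

lemma evalp_add: "evalp val (p + q) = evalp val p + evalp val q"
  unfolding evalp_def by (rule lin_add) (auto simp: distrib_right)

lemma evalp_single: "evalp val (sng M c) = c * mon val M"
  unfolding evalp_def by (rule lin_single) simp

lemma evalp_sum: "evalp val (sum f A) = (\<Sum>a\<in>A. evalp val (f a))"
  unfolding evalp_def by (rule lin_sum) (auto simp: distrib_right)

lemma evalp_zero[simp]: "evalp val 0 = 0" unfolding evalp_def by simp

lemma evalp_one[simp]: "evalp val 1 = 1"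
  using evalp_single[of val 0 1] by simp

lemma evalp_const: "evalp val (sng 0 c) = c"
  using evalp_single[of val 0 c] by simp

lemma evalp_mult: "evalp val (p * q) = evalp val p * evalp val q"
proof -
  have "p * q = (\<Sum>M\<in>ks p. sng M (lk p M)) * (\<Sum>N\<in>ks q. sng N (lk q N))"
    by (subst poly_expand[of p], subst poly_expand[of q]) simp
  also have "\<dots> = (\<Sum>M\<in>ks p. \<Sum>N\<in>ks q. sng (M + N) (lk p M * lk q N))"
    by (simp add: sum_product mult_single)
  finally have "evalp val (p * q) = (\<Sum>M\<in>ks p. \<Sum>N\<in>ks q. lk p M * lk q N * mon val (M + N))"
    by (simp add: evalp_sum evalp_single)
  also have "\<dots> = (\<Sum>M\<in>ks p. lk p M * mon val M) * (\<Sum>N\<in>ks q. lk q N * mon val N)"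
    by (simp add: sum_product mon_add ac_simps)
  also have "\<dots> = evalp val p * evalp val q" unfolding evalp_def lin_def ..
  finally show ?thesis .
qed

lemma evalp_power: "evalp val (p ^ n) = evalp val p ^ n"
  by (induction n) (auto simp: evalp_mult)

lemma evalp_prod_list: "evalp val (prod_list (map f xs)) = prod_list (map (\<lambda>x. evalp val (f x)) xs)"
  by (induction xs) (auto simp: evalp_mult)

locale DER =
  fixes D :: "'k::comm_ring_1 \<Rightarrow> 'k"
  assumes D_add: "D (a + b) = D a + D b" and D_mult: "D (a * b) = D a * b + a * D b"
begin

lemma D_zero[simp]: "D 0 = 0"
  using D_add[of 0 0] by simp

lemma D_sum: "D (sum f A) = (\<Sum>a\<in>A. D (f a))"
  by (induction A rule: infinite_finite_induct) (auto simp: D_add)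

lemma D_prod: "finite A \<Longrightarrow> D (prod f A) = (\<Sum>x\<in>A. D (f x) * (\<Prod>y\<in>A - {x}. f y))"
proof (induction A rule: finite_induct)
  case empty
  have "D 1 = D (1 * 1)" by simp
  then have "D 1 = 0" unfolding D_mult by simp
  then show ?case by simp
next
  case (insert a F)
  have "D (prod f (insert a F)) = D (f a) * prod f F + f a * (\<Sum>x\<in>F. D (f x) * (\<Prod>y\<in>F - {x}. f y))"
    using insert by (simp add: D_mult)
  also have "\<dots> = D (f a) * (\<Prod>y\<in>insert a F - {a}. f y) + (\<Sum>x\<in>F. D (f x) * (\<Prod>y\<in>insert a F - {x}. f y))"
  proof -
    have "(\<Prod>y\<in>insert a F - {x}. f y) = f a * (\<Prod>y\<in>F - {x}. f y)" if "x \<in> F" for x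
    proof -
      have "insert a F - {x} = insert a (F - {x})" using that insert(2) by auto
      then show ?thesis using insert(1,2) by simp
    qed
    then show ?thesis using insert(2) by (simp add: sum_distrib_left ac_simps)
  qed
  also have "\<dots> = (\<Sum>x\<in>insert a F. D (f x) * (\<Prod>y\<in>insert a F - {x}. f y))"
    using insert by simp
  finally show ?case .
qed

lemma D_power: "D (a ^ n) = of_nat n * a ^ (n - 1) * D a"
proof (induction n)
  case 0
  have "D 1 = D (1 * 1)" by simp
  then have "D 1 = 0" unfolding D_mult by simp
  then show ?case by simp
next
  case (Suc n)
  show ?case
  proof (cases n)
    case 0 then show ?thesis by simp
  next
    case (Suc k)
    then show ?thesis using Suc.IH by (simp add: D_mult algebra_simps)
  qed
qed

lemma mon_minus:
  assumes "x \<in> ks M"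
  shows "val x ^ (lk M x - 1) * (\<Prod>y\<in>ks M - {x}. val y ^ lk M y) = mon val (M - sng x 1)"
proof -
  have "mon val (M - sng x 1) = (\<Prod>y\<in>ks M. val y ^ lk (M - sng x 1) y)"
    by (rule mon_superset) (auto simp: in_keys_iff lookup_minus)
  also have "\<dots> = val x ^ lk (M - sng x 1) x * (\<Prod>y\<in>ks M - {x}. val y ^ lk (M - sng x 1) y)"
    using assms by (simp add: prod.remove)
  also have "(\<Prod>y\<in>ks M - {x}. val y ^ lk (M - sng x 1) y) = (\<Prod>y\<in>ks M - {x}. val y ^ lk M y)"
    by (intro prod.cong) (auto simp: lookup_minus lookup_single)
  finally show ?thesis by (simp add: lookup_minus)
qed

lemma D_mon:
  assumes "finite A" "ks M \<subseteq> A"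
  shows "D (mon val M) = (\<Sum>x\<in>A. of_nat (lk M x) * mon val (M - sng x 1) * D (val x))"
proof -
  have "D (mon val M) = (\<Sum>x\<in>ks M. D (val x ^ lk M x) * (\<Prod>y\<in>ks M - {x}. val y ^ lk M y))"
    unfolding mon_def by (rule D_prod) simp
  also have "\<dots> = (\<Sum>x\<in>ks M. of_nat (lk M x) * mon val (M - sng x 1) * D (val x))"
  proof (intro sum.cong refl)
    fix x assume x: "x \<in> ks M"
    have "D (val x ^ lk M x) * (\<Prod>y\<in>ks M - {x}. val y ^ lk M y)
       = of_nat (lk M x) * (val x ^ (lk M x - 1) * (\<Prod>y\<in>ks M - {x}. val y ^ lk M y)) * D (val x)"
      by (simp only: D_power ac_simps)
    also have "\<dots> = of_nat (lk M x) * mon val (M - sng x 1) * D (val x)" by (simp only: mon_minus[OF x])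
    finally show "D (val x ^ lk M x) * (\<Prod>y\<in>ks M - {x}. val y ^ lk M y) = of_nat (lk M x) * mon val (M - sng x 1) * D (val x)" .
  qed
  also have "\<dots> = (\<Sum>x\<in>A. of_nat (lk M x) * mon val (M - sng x 1) * D (val x))"
    using assms by (intro sum.mono_neutral_left) (auto simp: in_keys_iff)
  finally show ?thesis .
qed

end

lemma evalp_dcoef: "evalp val (dcoef d i p) = (\<Sum>M\<in>ks p. d i (lk p M) * mon val M)"
  unfolding dcoef_def by (simp add: evalp_sum evalp_single)

lemma evalp_pderiv: "evalp val (pderiv_var v p) = (\<Sum>M\<in>ks p. lk p M * of_nat (lk M v) * mon val (M - sng v 1))"
  unfolding pderiv_var_def by (simp add: evalp_sum evalp_single)

lemma evalp_dderiv:
  assumes "DER (d i)" and val: "\<And>x. val (dv i x) = d i (val x)"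
  shows "evalp val (dderiv d i p) = d i (evalp val p)"
proof -
  interpret DER "d i" by fact
  have val': "\<And>x. val (apply_op_var (sng i (Suc 0)) x) = d i (val x)" using val by simp
  have vp: "ks M \<subseteq> vars p" if "M \<in> ks p" for M using that unfolding vars_def by blast
  have "d i (evalp val p) = (\<Sum>M\<in>ks p. d i (lk p M) * mon val M + lk p M * d i (mon val M))"
    unfolding evalp_def lin_def by (simp add: D_sum D_mult)
  also have "\<dots> = (\<Sum>M\<in>ks p. d i (lk p M) * mon val M) + (\<Sum>M\<in>ks p. lk p M * d i (mon val M))"
    by (simp add: sum.distrib)
  also have "(\<Sum>M\<in>ks p. lk p M * d i (mon val M))
       = (\<Sum>M\<in>ks p. \<Sum>x\<in>vars p. lk p M * of_nat (lk M x) * mon val (M - sng x 1) * d i (val x))"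
    by (intro sum.cong refl) (simp add: D_mon[OF finite_vars vp] sum_distrib_left ac_simps)
  also have "\<dots> = (\<Sum>x\<in>vars p. \<Sum>M\<in>ks p. lk p M * of_nat (lk M x) * mon val (M - sng x 1) * d i (val x))"
    by (rule sum.swap)
  also have "\<dots> = (\<Sum>x\<in>vars p. evalp val (pderiv_var x p) * val (dv i x))"
    by (simp add: evalp_pderiv val val' sum_distrib_right)
  finally show ?thesis
    by (simp add: dderiv_alt evalp_add evalp_sum evalp_mult evalp_dcoef vars_pvar evalp_single pvar_def mon_var)
qed



context RK begin

lemma prank_less_reduced:
  fixes c f :: "'k::comm_ring_1 dpoly"
  assumes c: "c \<in> dring m l" "vars c \<noteq> {}" and f: "f \<in> dring m l" "vars f \<noteq> {}"
    and pl: "prank_less rk c f"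
  shows "reduced_wrt rk c f"
proof -
  have lc: "leader rk c \<in> vars c" "\<forall>v\<in>vars c. rk v (leader rk c)" "VV (leader rk c)"
    using leader_props[OF c] leader_valid[OF c] by auto
  have lf: "leader rk f \<in> vars f" "\<forall>v\<in>vars f. rk v (leader rk f)" "VV (leader rk f)"
    using leader_props[OF f] leader_valid[OF f] by auto
  have cf: "rk (leader rk c) (leader rk f)" using pl rk_refl[OF lf(3)] unfolding prank_less_def rk_less_def by auto
  show ?thesis unfolding reduced_wrt_def
  proof
    show "\<forall>v\<in>vars c. \<not> is_proper_derivative v (leader rk f)"
    proof (intro ballI notI)
      fix v assume v: "v \<in> vars c" "is_proper_derivative v (leader rk f)"
      have vv: "VV v" using vars_valid[OF c(1) v(1)] .
      have "rk_less rk (leader rk f) v" using rk_less_proper[OF v(2) vv lf(3)] .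
      moreover have "rk v (leader rk f)" using rk_trans[OF vv lc(3) lf(3)] lc(2) v(1) cf by blast
      ultimately show False using rk_less_not_le[OF lf(3) vv] by blast
    qed
    show "deg_in (leader rk f) c < deg_in (leader rk f) f"
    proof (cases "leader rk c = leader rk f")
      case True then show ?thesis using pl unfolding prank_less_def rk_less_def by auto
    next
      case False
      then have lt: "rk_less rk (leader rk c) (leader rk f)" using pl unfolding prank_less_def by auto
      have "leader rk f \<notin> vars c"
      proof
        assume "leader rk f \<in> vars c"
        then have "rk (leader rk f) (leader rk c)" using lc(2) by blast
        then show False using lt rk_less_not_le[OF lc(3) lf(3)] by blast
      qed
      then show ?thesis using deg_in_notin deg_in_pos[OF lf(1)] by metis
    qed
  qed
qed

lemma prank_less_other:
  fixes c f :: "'k::comm_ring_1 dpoly"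
  assumes c: "c \<in> dring m l" "vars c \<noteq> {}" and f: "f \<in> dring m l" "vars f \<noteq> {}"
    and npl: "\<not> prank_less rk c f" and red: "reduced_wrt rk f c"
  shows "prank_less rk f c"
proof -
  have vc: "VV (leader rk c)" using leader_valid[OF c] .
  have vf: "VV (leader rk f)" using leader_valid[OF f] .
  show ?thesis
  proof (cases "leader rk f = leader rk c")
    case True
    then show ?thesis using red unfolding reduced_wrt_def prank_less_def by simp
  next
    case False
    have "rk (leader rk f) (leader rk c)"
    proof (rule ccontr)
      assume "\<not> rk (leader rk f) (leader rk c)"
      then have "rk_less rk (leader rk c) (leader rk f)" using rk_less_not_le[OF vc vf] by blast
      then show False using npl unfolding prank_less_def by blast
    qed
    then show ?thesis using False unfolding prank_less_def rk_less_def by blast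
  qed
qed

end

context MAIN begin

lemma no_reduced_nc:
  assumes f: "f \<in> J" "f \<in> R" "vars f \<noteq> {}" and red: "\<forall>k<length C. reduced_wrt rk f (C ! k)"
  shows False
proof -
  let ?P = "\<lambda>c. prank_less rk c f"
  define i where "i = length (takeWhile ?P C)"
  have iC: "i \<le> length C" unfolding i_def by (rule length_takeWhile_le)
  have lt: "prank_less rk (C ! j) f" if "j < i" for j
    using that unfolding i_def by (metis nth_mem set_takeWhileD takeWhile_nth)
  have nlt: "\<not> prank_less rk (C ! i) f" if "i < length C"
    using that unfolding i_def by (rule nth_length_takeWhile)
  define B where "B = take i C @ [f]"
  have lB: "length B = Suc i" unfolding B_def using iC by simp
  have Bj: "B ! j = C ! j" if "j < i" for j unfolding B_def using that iC by (simp add: nth_append)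
  have Bi: "B ! i = f" unfolding B_def using iC by (simp add: nth_append)
  have CR: "j < length C \<Longrightarrow> C ! j \<in> R \<and> vars (C ! j) \<noteq> {}" for j using C_R C_nc nth_mem by blast
  have setB: "set B \<subseteq> set C \<union> {f}" unfolding B_def using set_take_subset by fastforce
  have autB: "autoreduced m l rk B" unfolding autoreduced_def
  proof (intro conjI allI impI)
    show "set B \<subseteq> R" using setB C_R f(2) by blast
    show "\<forall>a\<in>set B. vars a \<noteq> {}" using setB C_nc f(3) by blast
    fix a b
    {
      assume ab: "a < b" "b < length B"
      show "prank_less rk (B ! a) (B ! b)"
      proof (cases "b < i")
        case True then show ?thesis using aut ab iC Bj unfolding autoreduced_def by auto
      next
        case False then have "b = i" using ab lB by simp
        then show ?thesis using ab Bj Bi lt by simp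
      qed
    }
    {
      assume ab: "a < length B" "b < length B" "a \<noteq> b"
      show "reduced_wrt rk (B ! a) (B ! b)"
      proof (cases "a < i")
        case a: True
        show ?thesis
        proof (cases "b < i")
          case True then show ?thesis using reduced_C[of a b] a ab iC Bj by simp
        next
          case False then have "b = i" using ab lB by simp
          then show ?thesis using prank_less_reduced[OF conjunct1[OF CR] conjunct2[OF CR] f(2,3) lt[OF a]]
              a iC Bj Bi by simp
        qed
      next
        case False then have ai: "a = i" using ab lB by simp
        then have "b < i" using ab lB by simp
        then show ?thesis using ai red iC Bj Bi by simp
      qed
    }
  qed
  have subJ: "set B \<subseteq> J" using setB C_J f(1) by blast
  have "aset_less rk B C" unfolding aset_less_def
  proof (intro exI[of _ i] conjI allI impI)
    fix j assume j: "j < i"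
    show "j < length B" using j lB by simp
    show "j < length C" using j iC by simp
    show "prank_eq rk (B ! j) (C ! j)" using Bj[OF j] unfolding prank_eq_def by simp
  next
    show "i < length B \<and> i < length C \<and> prank_less rk (B ! i) (C ! i) \<or> i = length C \<and> i < length B"
    proof (cases "i < length C")
      case True
      have "prank_less rk f (C ! i)"
        using prank_less_other[OF conjunct1[OF CR[OF True]] conjunct2[OF CR[OF True]] f(2,3) nlt[OF True]] red True
        by blast
      then show ?thesis using True lB Bi by simp
    next
      case False then show ?thesis using iC lB by simp
    qed
  qed
  then show False using kcs autB subJ unfolding kolchin_char_set_def by blast
qed

end



lemma linear_form:
  fixes p :: "'k::comm_ring_1 dpoly"
  assumes "vars p \<subseteq> {u}" "deg_in u p \<le> 1"
  shows "p = sng (sng u 1) (lk p (sng u 1)) + sng 0 (lk p 0)"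
proof -
  have keysM: "M = 0 \<or> M = sng u 1" if M: "M \<in> ks p" for M
  proof -
    have ku: "ks M \<subseteq> {u}" using assms(1) M unfolding vars_def by blast
    have "lk M u \<le> 1" using assms(2) M unfolding deg_in_le bnd_def by blast
    then consider "lk M u = 0" | "lk M u = 1" by linarith
    then show ?thesis
    proof cases
      case 1
      have "M = 0" by (rule poly_mapping_eqI) (use ku 1 in \<open>auto simp: in_keys_iff\<close>)
      then show ?thesis by simp
    next
      case 2
      have "M = sng u 1" by (rule poly_mapping_eqI) (use ku 2 in \<open>auto simp: in_keys_iff lookup_single when_def\<close>)
      then show ?thesis by simp
    qed
  qed
  have nz: "sng u (1::nat) \<noteq> 0" by simp
  show ?thesis
  proof (rule poly_mapping_eqI)
    fix N
    show "lk p N = lk (sng (sng u 1) (lk p (sng u 1)) + sng 0 (lk p 0)) N"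
    proof (cases "N = sng u 1")
      case True then show ?thesis using nz by (simp add: lookup_add lookup_single when_def)
    next
      case F1: False
      show ?thesis
      proof (cases "N = 0")
        case True then show ?thesis using nz by (simp add: lookup_add lookup_single when_def)
      next
        case False
        then have "N \<notin> ks p" using keysM F1 by blast
        then show ?thesis using F1 False by (simp add: lookup_add lookup_single when_def in_keys_iff)
      qed
    qed
  qed
qed

lemma linear_form_nz:
  fixes p :: "'k::comm_ring_1 dpoly"
  assumes "vars p \<subseteq> {u}" "deg_in u p \<le> 1" "u \<in> vars p"
  shows "lk p (sng u 1) \<noteq> 0"
proof -
  obtain M where M: "M \<in> ks p" "u \<in> ks M" using assms(3) unfolding vars_def by blast
  have "M \<noteq> 0" using M(2) by auto
  have ku: "ks M \<subseteq> {u}" using assms(1) M unfolding vars_def by blast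
  have "lk M u \<le> 1" using assms(2) M unfolding deg_in_le bnd_def by blast
  moreover have "lk M u \<noteq> 0" using M(2) by (simp add: in_keys_iff)
  ultimately have "lk M u = 1" by simp
  then have "M = sng u 1" by (intro poly_mapping_eqI) (use ku in \<open>auto simp: in_keys_iff lookup_single when_def\<close>)
  then show ?thesis using M(1) by (simp add: in_keys_iff)
qed

lemma linear_initial_separant:
  fixes a b :: "'k::comm_ring_1"
  assumes p: "p = sng (sng u 1) a + sng 0 b" and a: "a \<noteq> 0" and ld: "leader rk p = u"
  shows "initial rk p = sng 0 a" "separant rk p = sng 0 a"
proof -
  let ?E = "sng u (1::nat)"
  have nz: "?E \<noteq> 0" by simp
  have lkE: "lk p ?E = a" "lk p 0 = b" using nz unfolding p by (simp_all add: lookup_add lookup_single when_def)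
  have kp: "ks p \<subseteq> {?E, 0}" unfolding p using keys_add[of "sng ?E a" "sng 0 b"]
    by (auto split: if_splits)
  have Ek: "?E \<in> ks p" using lkE(1) a by (simp add: in_keys_iff)
  have deg: "deg_in u p = 1"
  proof -
    have "bnd u 1 p" unfolding bnd_def using kp by auto
    moreover have "\<not> bnd u 0 p" unfolding bnd_def using Ek by (intro notI) (drule bspec, assumption, simp)
    ultimately show ?thesis using deg_in_le[of u p] by (metis le_Suc_eq One_nat_def le_zero_eq)
  qed
  have "{M \<in> ks p. lk M u = 1} = {?E}" using kp Ek by auto
  then show "initial rk p = sng 0 a"
    unfolding initial_def lcoeff_in_def ld deg using lkE by simp
  have "separant rk p = pderiv_var u p" unfolding separant_def ld ..
  also have "\<dots> = pderiv_var u (sng ?E a) + pderiv_var u (sng 0 b)"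
    unfolding p pderiv_add ..
  also have "\<dots> = sng 0 a" by (simp add: pderiv_single)
  finally show "separant rk p = sng 0 a" .
qed

definition dapp :: "(nat \<Rightarrow> 'k \<Rightarrow> 'k) \<Rightarrow> nat \<Rightarrow> dop \<Rightarrow> 'k \<Rightarrow> 'k" where
  "dapp d m \<theta> c = List.foldr (\<lambda>i. d i ^^ lk \<theta> i) [0..<m] c"

lemma dapp_zero: "dapp d m 0 c = c"
proof -
  have "List.foldr (\<lambda>i. d i ^^ lk (0::dop) i) xs c = c" for xs by (induction xs) auto
  then show ?thesis unfolding dapp_def by simp
qed

lemma dapp_step:
  assumes comm: "\<And>a i j. i < m \<Longrightarrow> j < m \<Longrightarrow> d i (d j a) = d j (d i a)" and i: "i < m"
  shows "dapp d m (sng i 1 + \<theta>) c = d i (dapp d m \<theta> c)"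
proof -
  have cpow: "(d y ^^ n) (d i a) = d i ((d y ^^ n) a)" if "y < m" for y n a
    using that by (induction n) (auto simp: comm[OF that i])
  have "distinct xs \<Longrightarrow> i \<in> set xs \<Longrightarrow> set xs \<subseteq> {..<m} \<Longrightarrow>
     List.foldr (\<lambda>j. d j ^^ lk (sng i 1 + \<theta>) j) xs c = d i (List.foldr (\<lambda>j. d j ^^ lk \<theta> j) xs c)" for xs
  proof (induction xs)
    case Nil then show ?case by simp
  next
    case (Cons y ys)
    show ?case
    proof (cases "y = i")
      case True
      then have "i \<notin> set ys" using Cons.prems by simp
      then have "List.foldr (\<lambda>j. d j ^^ lk (sng i 1 + \<theta>) j) ys c = List.foldr (\<lambda>j. d j ^^ lk \<theta> j) ys c"
        by (intro foldr_cong) (auto simp: lookup_add lookup_single when_def)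
      then show ?thesis using True by (simp add: lookup_add)
    next
      case False
      then have "List.foldr (\<lambda>j. d j ^^ lk (sng i 1 + \<theta>) j) ys c = d i (List.foldr (\<lambda>j. d j ^^ lk \<theta> j) ys c)"
        using Cons by simp
      moreover have "lk (sng i 1 + \<theta>) y = lk \<theta> y" using False by (simp add: lookup_add lookup_single when_def)
      ultimately show ?thesis using cpow[of y] Cons.prems by simp
    qed
  qed
  moreover have "set [0..<m] \<subseteq> {..<m}" by auto
  ultimately show ?thesis unfolding dapp_def using i by simp
qed

lemma DER_diff_field: "diff_field d m \<Longrightarrow> i < m \<Longrightarrow> DER (d i)"
  unfolding diff_field_def DER_def by blast

context MAIN begin

lemma no_unit:
  assumes one: "1 \<in> J"
  shows False
proof -
  have allJ: "p \<in> J" if "p \<in> R" for p using J_mult[OF one that] by simp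
  have pz: "\<not> is_proper_derivative (0, j) u" for j u
  proof
    assume "is_proper_derivative (0, j) u"
    then obtain \<theta> where "\<theta> \<noteq> 0" "(0, j) = apply_op_var \<theta> u" unfolding is_proper_derivative_def by blast
    then have "\<theta> + fst u = 0" "\<theta> \<noteq> 0" unfolding apply_op_var_def by auto
    moreover from this have "\<theta> = 0" by (intro poly_mapping_eqI) (metis add_eq_0_iff_both_eq_0 lookup_add lookup_zero)
    ultimately show False by simp
  qed
  have degpz: "deg_in z (pvar z :: 'k dpoly) = 1" for z
  proof -
    have "bnd z 1 (pvar z :: 'k dpoly)" "\<not> bnd z 0 (pvar z :: 'k dpoly)" unfolding bnd_def pvar_def by auto
    then show ?thesis using deg_in_le[of z "pvar z :: 'k dpoly"] by (metis le_Suc_eq One_nat_def le_zero_eq)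
  qed
  have stepA: "\<exists>k<length C. ld k = (0, j) \<and> deg_in (0, j) (C ! k) = 1" if j: "j < l" for j
  proof -
    let ?z = "(0::dop, j)"
    have vz: "VV ?z" using j unfolding valid_var_def valid_op_def by simp
    have pR: "(pvar ?z :: 'k dpoly) \<in> R" unfolding dring_iff using vz by (simp add: vars_pvar)
    have nc: "vars (pvar ?z :: 'k dpoly) \<noteq> {}" by (simp add: vars_pvar)
    have "\<not> (\<forall>k<length C. reduced_wrt rk (pvar ?z :: 'k dpoly) (C ! k))"
      using no_reduced_nc[OF allJ[OF pR] pR nc] by blast
    then obtain k where k: "k < length C" "\<not> reduced_wrt rk (pvar ?z :: 'k dpoly) (C ! k)" by blast
    then have "\<not> deg_in (ld k) (pvar ?z :: 'k dpoly) < deg_in (ld k) (C ! k)"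
      unfolding reduced_wrt_def using pz by (auto simp: vars_pvar)
    moreover have "0 < deg_in (ld k) (C ! k)" using deg_in_pos[OF ld_props(1)[OF k(1)]] .
    ultimately have "ld k \<in> vars (pvar ?z :: 'k dpoly)" using deg_in_notin by fastforce
    then have lz: "ld k = ?z" by (simp add: vars_pvar)
    then have "deg_in ?z (C ! k) \<le> 1" using \<open>\<not> deg_in (ld k) (pvar ?z :: 'k dpoly) < deg_in (ld k) (C ! k)\<close> degpz by simp
    then have "deg_in ?z (C ! k) = 1" using \<open>0 < deg_in (ld k) (C ! k)\<close> lz by simp
    then show ?thesis using k(1) lz by blast
  qed
  have ldform: "fst (ld k) = 0 \<and> deg_in (ld k) (C ! k) = 1" if k: "k < length C" for k
  proof -
    obtain \<theta> j where lk: "ld k = (\<theta>, j)" by (cases "ld k")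
    have vj: "j < l" "valid_op m \<theta>" using ld_props(3)[OF k] lk unfolding valid_var_def by auto
    obtain k' where k': "k' < length C" "ld k' = (0, j)" "deg_in (0, j) (C ! k') = 1" using stepA[OF vj(1)] by blast
    have "\<theta> = 0"
    proof (rule ccontr)
      assume "\<theta> \<noteq> 0"
      then have "is_proper_derivative (ld k) (ld k')" unfolding is_proper_derivative_def apply_op_var_def
        using lk k'(2) by auto
      then show False using ld_not_proper[OF k k'(1)] by blast
    qed
    then have "ld k = ld k'" using lk k'(2) by simp
    then have "k = k'" using ld_inj[OF k k'(1)] by simp
    then show ?thesis using k' lk \<open>\<theta> = 0\<close> by simp
  qed
  have varsC: "vars (C ! k) \<subseteq> {ld k}" if k: "k < length C" for k
  proof
    fix x assume x: "x \<in> vars (C ! k)"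
    have vx: "VV x" using vars_valid[OF C_R[OF nth_mem[OF k]] x] .
    obtain \<theta> j where xe: "x = (\<theta>, j)" by (cases x)
    have vj: "j < l" using vx xe unfolding valid_var_def by auto
    obtain k' where k': "k' < length C" "ld k' = (0, j)" "deg_in (0, j) (C ! k') = 1" using stepA[OF vj] by blast
    show "x \<in> {ld k}"
    proof (cases "\<theta> = 0")
      case False
      then have pd: "is_proper_derivative x (ld k')" unfolding is_proper_derivative_def apply_op_var_def
        using xe k'(2) by auto
      show ?thesis
      proof (cases "k' = k")
        case True
        then have "rk_less rk (ld k) x" using rk_less_proper[OF pd vx ld_props(3)[OF k'(1)]] by simp
        moreover have "rk x (ld k)" using ld_props(2)[OF k] x by blast
        ultimately show ?thesis using rk_less_not_le[OF ld_props(3)[OF k] vx] by blast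
      next
        case False
        then show ?thesis using reduced_C[OF k k'(1)] x pd False unfolding reduced_wrt_def by auto
      qed
    next
      case True
      then have xk': "x = ld k'" using xe k'(2) by simp
      show ?thesis
      proof (cases "k' = k")
        case True then show ?thesis using xk' by simp
      next
        case False
        then have "deg_in (ld k') (C ! k) < deg_in (ld k') (C ! k')" using reduced_C[OF k k'(1)] unfolding reduced_wrt_def by auto
        moreover have "0 < deg_in (ld k') (C ! k)" using deg_in_pos x xk' by blast
        ultimately show ?thesis using k'(2,3) by simp
      qed
    qed
  qed
  define aa where "aa k = lk (C ! k) (sng (ld k) 1)" for k
  define bb where "bb k = lk (C ! k) 0" for k
  have Cform: "C ! k = sng (sng (ld k) 1) (aa k) + sng 0 (bb k)" "aa k \<noteq> 0" if k: "k < length C" for k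
  proof -
    have "deg_in (ld k) (C ! k) \<le> 1" using ldform[OF k] by simp
    then show "C ! k = sng (sng (ld k) 1) (aa k) + sng 0 (bb k)" "aa k \<noteq> 0"
      using linear_form[OF varsC[OF k]] linear_form_nz[OF varsC[OF k] _ ld_props(1)[OF k]]
      unfolding aa_def bb_def by auto
  qed
  have IS: "initial rk (C ! k) = sng 0 (aa k)" "separant rk (C ! k) = sng 0 (aa k)" if k: "k < length C" for k
    using linear_initial_separant[OF Cform(1)[OF k] Cform(2)[OF k]] by auto
  define kk where "kk j = (SOME k. k < length C \<and> ld k = (0, j))" for j
  define cc where "cc j = - (bb (kk j) / aa (kk j))" for j
  define val where "val x = dapp d m (fst x) (cc (snd x))" for x
  have comm: "\<And>a i j. i < m \<Longrightarrow> j < m \<Longrightarrow> d i (d j a) = d j (d i a)" using df unfolding diff_field_def by blast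
  have valdv: "val (dv i x) = d i (val x)" if "i < m" for i x
    unfolding val_def apply_op_var_def using dapp_step[where d=d and m=m, OF comm that] by simp
  have evC: "evalp val (C ! k) = 0" if k: "k < length C" for k
  proof -
    obtain j where j: "ld k = (0, j)" using ldform[OF k] by (cases "ld k") auto
    have "kk j < length C \<and> ld (kk j) = (0, j)" unfolding kk_def by (rule someI[of _ k]) (use k j in simp)
    then have kkj: "kk j = k" using ld_inj[OF _ k] j by auto
    have "val (ld k) = cc j" unfolding val_def j by (simp add: dapp_zero)
    then have "evalp val (C ! k) = aa k * (- (bb k / aa k)) + bb k"
      by (subst Cform(1)[OF k]) (simp add: evalp_add evalp_single mon_var cc_def kkj)
    then show ?thesis using Cform(2)[OF k] by simp
  qed
  have evH: "evalp val H \<noteq> 0"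
  proof -
    have "evalp val H = prod_list (map (\<lambda>c. evalp val (initial rk c * separant rk c)) C)"
      unfolding H_of_def by (rule evalp_prod_list)
    moreover have "0 \<notin> set (map (\<lambda>c. evalp val (initial rk c * separant rk c)) C)"
    proof
      assume "0 \<in> set (map (\<lambda>c. evalp val (initial rk c * separant rk c)) C)"
      then obtain k where k: "k < length C" "evalp val (initial rk (C ! k) * separant rk (C ! k)) = 0"
        by (auto simp: in_set_conv_nth)
      then show False using IS[OF k(1)] Cform(2)[OF k(1)] by (simp add: evalp_mult evalp_const)
    qed
    ultimately show ?thesis by (simp add: prod_list_zero_iff)
  qed
  define P where "P = {p \<in> R. evalp val p = 0}"
  have PD: "is_diff_ideal d m l P" unfolding is_diff_ideal_def is_ideal_in_def P_def
  proof (intro conjI allI impI ballI)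
    show "{p \<in> R. evalp val p = 0} \<subseteq> R" by blast
    show "0 \<in> {p \<in> R. evalp val p = 0}" using VC_zero unfolding dring_VC by auto
    fix a assume a: "a \<in> {p \<in> R. evalp val p = 0}"
    {
      fix b assume b: "b \<in> {p \<in> R. evalp val p = 0}"
      show "a + b \<in> {p \<in> R. evalp val p = 0}" using a b VC_add unfolding dring_VC by (auto simp: evalp_add)
    }
    {
      fix r assume r: "r \<in> R"
      show "r * a \<in> {p \<in> R. evalp val p = 0}" using a r R_mult by (auto simp: evalp_mult)
    }
    {
      fix i assume i: "i < m"
      interpret DER "d i" using DER_diff_field[OF df i] .
      have "dderiv d i a \<in> R" unfolding dring_iff
      proof
        fix x assume "x \<in> vars (dderiv d i a)"
        then have "x \<in> vars a \<or> (\<exists>y\<in>vars a. x = dv i y)" using vars_dderiv[of d i a] by blast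
        then show "VV x" using a valid_dv[OF i] unfolding dring_iff by blast
      qed
      moreover have "evalp val (dderiv d i a) = 0"
        using evalp_dderiv[where d=d and i=i and val=val and p=a, OF DER_diff_field[OF df i] valdv[OF i]] a by simp
      ultimately show "dderiv d i a \<in> {p \<in> R. evalp val p = 0}" by blast
    }
  qed
  have CP: "set C \<subseteq> P" unfolding P_def using evC C_R by (auto simp: in_set_conv_nth)
  have "diff_ideal_gen d m l (set C) \<subseteq> P" unfolding diff_ideal_gen_def using PD CP by blast
  moreover obtain n where "H ^ n * 1 \<in> diff_ideal_gen d m l (set C)" using one unfolding J_sat saturation_def by blast
  ultimately have "evalp val (H ^ n) = 0" unfolding P_def by auto
  then show False using evH by (simp add: evalp_power)
qed

lemma Z: "f \<in> J \<Longrightarrow> f \<in> R \<Longrightarrow> (\<forall>k<length C. reduced_wrt rk f (C ! k)) \<Longrightarrow> f = 0"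
proof (rule ccontr)
  assume f: "f \<in> J" "f \<in> R" "\<forall>k<length C. reduced_wrt rk f (C ! k)" "f \<noteq> 0"
  show False
  proof (cases "vars f = {}")
    case False then show False using no_reduced_nc f by blast
  next
    case True
    then have fc: "f = sng 0 (lk f 0)" by (rule vars_empty_const)
    then have c0: "lk f 0 \<noteq> 0" using f(4) by (metis single_zero)
    have "sng 0 (inverse (lk f 0)) \<in> R" using VC_const unfolding dring_VC by blast
    then have "sng 0 (inverse (lk f 0)) * f \<in> J" using J_mult f(1) by blast
    moreover have "sng 0 (inverse (lk f 0)) * f = 1"
      by (subst fc) (simp add: mult_single c0)
    ultimately show False using no_unit by simp
  qed
qed

end

context MAIN begin


lemma RS_gen:
  fixes g I g0 :: "'k dpoly"
  assumes f: "f \<in> Rh" "f \<in> J" and v: "v \<in> bad f" "\<forall>w\<in>bad f. rk w v"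
    and g: "g = I * pvar v ^ e + g0" "v \<notin> vars I" "bnd v (e - 1) g0" "e \<ge> 1" "g \<in> Idl" "g \<in> J"
    and I: "I \<in> Rh" "\<forall>x\<in>vars I \<union> vars g0. VV x \<and> rk x v" "\<exists>X\<in>Rh. H = I * X"
    and clean: "\<And>r. bnd v (e - 1) r \<Longrightarrow> v \<in> vars r \<Longrightarrow> v \<notin> bad r"
  shows "\<exists>a X f1. f1 \<in> Rh \<and> f1 \<in> J \<and> X \<in> Rh \<and> (\<forall>w\<in>bad f1. rk_less rk w v) \<and> H ^ a * f - X * f1 \<in> Idl"
proof -
  have vf: "v \<in> vars f" using v(1) bad_sub by blast
  have vv: "VV v" "var_ord v \<le> h" using Rh_VV[OF f(1) vf] by auto
  obtain a q r where qr: "I ^ a * f = q * g + r" "bnd v (e - 1) r"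
    "vars q \<subseteq> vars f \<union> vars I \<union> vars g0 \<union> {v}" "vars r \<subseteq> vars f \<union> vars I \<union> vars g0 \<union> {v}"
    "\<forall>w X. w \<noteq> v \<longrightarrow> w \<notin> vars I \<longrightarrow> w \<notin> vars g0 \<longrightarrow> bnd w X f \<longrightarrow> bnd w X q \<and> bnd w X r"
    using pseudo_div[OF g(1-4) bnd_deg[of v f]] by blast
  have okv: "\<forall>x\<in>vars f \<union> vars I \<union> vars g0 \<union> {v}. VV x \<and> var_ord x \<le> h"
  proof
    fix x assume x: "x \<in> vars f \<union> vars I \<union> vars g0 \<union> {v}"
    show "VV x \<and> var_ord x \<le> h"
    proof (cases "x \<in> vars I \<union> vars g0")
      case True
      then have "VV x" "rk x v" using I(2) by auto
      then show ?thesis using orderly_le[OF orderly _ vv(1)] vv(2) by fastforce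
    next
      case False then have "x \<in> vars f \<or> x = v" using x by blast
      then show ?thesis using Rh_VV[OF f(1)] vv by blast
    qed
  qed
  have qR: "q \<in> Rh" and rR: "r \<in> Rh" unfolding dring_h_iff using okv qr(3,4) by blast+
  have "r = I ^ a * f - q * g" using qr(1) by simp
  moreover have "I ^ a * f \<in> J" using J_mult[OF f(2) R_power[OF Rh_R[OF I(1)]]] by (simp add: ac_simps)
  moreover have "q * g \<in> J" using J_mult[OF g(6) Rh_R[OF qR]] by (simp add: ac_simps)
  ultimately have rJ: "r \<in> J" using J_diff' by simp
  obtain X where X: "X \<in> Rh" "H = I * X" using I(3) by blast
  have "H ^ a * f - X ^ a * r = (X ^ a * q) * g"
  proof -
    have "H ^ a * f = X ^ a * (I ^ a * f)" using X(2) by (simp add: power_mult_distrib ac_simps)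
    then show ?thesis unfolding qr(1) by (simp add: algebra_simps)
  qed
  moreover have "(X ^ a * q) * g \<in> Idl" using Idl_mult[OF g(5)] Rh_mult[OF Rh_power[OF X(1)] qR] by simp
  ultimately have inI: "H ^ a * f - X ^ a * r \<in> Idl" by simp
  have badr: "\<forall>w\<in>bad r. rk_less rk w v"
  proof
    fix w assume wb: "w \<in> bad r"
    then have wr: "w \<in> vars r" using bad_sub by blast
    then have w4: "w \<in> vars f \<union> vars I \<union> vars g0 \<union> {v}" using qr(4) by blast
    have vw: "VV w" using okv w4 by blast
    show "rk_less rk w v"
    proof (cases "w = v")
      case True then show ?thesis using clean[OF qr(2)] wr wb by blast
    next
      case wv: False
      show ?thesis
      proof (cases "w \<in> vars I \<union> vars g0")
        case True then show ?thesis using I(2) wv unfolding rk_less_def by blast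
      next
        case False
        then have wf: "w \<in> vars f" using w4 wv by blast
        show ?thesis
        proof (rule ccontr)
          assume "\<not> rk_less rk w v"
          then have "rk v w" using rk_less_not_le[OF vw vv(1)] by blast
          then have nbf: "w \<notin> bad f" using v(2) rk_antisym[OF vw vv(1)] wv by blast
          have bw: "bnd w (deg_in w f) r" using qr(5) wv False bnd_deg[of w f] by blast
          then have "deg_in w r \<le> deg_in w f" using deg_in_le by blast
          then have "w \<in> bad f" using wb wf unfolding bad_def by fastforce
          then show False using nbf by blast
        qed
      qed
    qed
  qed
  show ?thesis using rR rJ Rh_power[OF X(1)] badr inI by blast
qed

lemma RS:
  assumes f: "f \<in> Rh" "f \<in> J" and v: "v \<in> bad f" "\<forall>w\<in>bad f. rk w v"
  shows "\<exists>a X f1. f1 \<in> Rh \<and> f1 \<in> J \<and> X \<in> Rh \<and> (\<forall>w\<in>bad f1. rk_less rk w v) \<and> H ^ a * f - X * f1 \<in> Idl"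
proof -
  have vf: "v \<in> vars f" using v(1) bad_sub by blast
  have vv: "VV v" "var_ord v \<le> h" using Rh_VV[OF f(1) vf] by auto
  show ?thesis
  proof (cases "\<exists>k<length C. is_proper_derivative v (ld k)")
    case True
    then obtain k where k: "k < length C" "is_proper_derivative v (ld k)" by blast
    obtain \<theta> where th: "\<theta> \<noteq> 0" "valid_op m \<theta>" "v = apply_op_var \<theta> (ld k)"
      using proper_deriv_op[OF k(2) vv(1)] by blast
    have ck: "C ! k \<in> R" "vars (C ! k) \<noteq> {}" "C ! k \<in> set C" using C_R C_nc k(1) by auto
    obtain T where T: "apply_op d m \<theta> (C ! k) = separant rk (C ! k) * pvar v + T"
        "\<forall>x\<in>vars T. VV x \<and> rk_less rk x v"
      using apply_op_struct[OF ck(1,2) th(2,1), where d=d] th(3) by blast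
    have lv: "rk_less rk (ld k) v" using rk_less_deriv[OF th(2,1) ld_props(3)[OF k(1)]] th(3) by simp
    have vS: "\<forall>x\<in>vars (separant rk (C ! k)). VV x \<and> rk_less rk x v"
    proof
      fix x assume "x \<in> vars (separant rk (C ! k))"
      then have x: "x \<in> vars (C ! k)" using vars_separant by blast
      then have "VV x" "rk x (ld k)" using ld_props[OF k(1)] vars_valid[OF ck(1)] by auto
      then show "VV x \<and> rk_less rk x v" using rk_le_less_trans[OF _ ld_props(3)[OF k(1)] vv(1) _ lv] by blast
    qed
    have gG: "apply_op d m \<theta> (C ! k) \<in> Gset"
      unfolding Gset_def using k(1) th vv(2) by blast
    show ?thesis
    proof (rule RS_gen[OF f v])
      show "apply_op d m \<theta> (C ! k) = separant rk (C ! k) * pvar v ^ 1 + T" using T(1) by simp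
      show "v \<notin> vars (separant rk (C ! k))" using vS unfolding rk_less_def by blast
      show "bnd v (1 - 1) T" using T(2) unfolding rk_less_def by (auto intro: bnd_notin)
      show "1 \<le> (1::nat)" by simp
      show "apply_op d m \<theta> (C ! k) \<in> Idl" using gG G_Id by blast
      show "apply_op d m \<theta> (C ! k) \<in> J" using gG G_J by blast
      show "separant rk (C ! k) \<in> Rh" using sep_Rh[OF ck(3)] .
      show "\<forall>x\<in>vars (separant rk (C ! k)) \<union> vars T. VV x \<and> rk x v" using vS T(2) unfolding rk_less_def by blast
      show "\<exists>X\<in>Rh. H = separant rk (C ! k) * X" using H_factor(2)[OF ck(3)] .
      fix r :: "'k dpoly" assume "bnd v (1 - 1) r" "v \<in> vars r"
      then show "v \<notin> bad r" using bnd0_notin[of v r] by simp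
    qed
  next
    case False
    then obtain k where k: "k < length C" "v = ld k" "deg_in (ld k) (C ! k) \<le> deg_in v f"
      using v(1) unfolding bad_def by blast
    have ck: "C ! k \<in> R" "vars (C ! k) \<noteq> {}" "C ! k \<in> set C" using C_R C_nc k(1) by auto
    define e where "e = deg_in v (C ! k)"
    have e1: "e \<ge> 1" unfolding e_def using deg_in_pos[OF ld_props(1)[OF k(1)]] k(2) by simp
    have init: "initial rk (C ! k) = cpart v e (C ! k)" unfolding initial_def lcoeff_cpart e_def k(2) ..
    have gG: "apply_op d m 0 (C ! k) \<in> Gset"
      unfolding Gset_def using k(1,2) vv(2) by (intro CollectI exI[of _ 0] exI[of _ k]) (auto simp: valid_op_def)
    then have gG': "C ! k \<in> Gset" by (simp add: apply_op_zero)
    have vCk: "\<forall>x\<in>vars (C ! k). VV x \<and> rk x v" using ld_props[OF k(1)] vars_valid[OF ck(1)] k(2) by auto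
    show ?thesis
    proof (rule RS_gen[OF f v])
      show "C ! k = initial rk (C ! k) * pvar v ^ e + rpart v e (C ! k)" unfolding init by (rule dec)
      show "v \<notin> vars (initial rk (C ! k))" unfolding init using vars_cpart by blast
      show "bnd v (e - 1) (rpart v e (C ! k))" unfolding e_def by (rule bnd_rpart[OF bnd_deg])
      show "1 \<le> e" using e1 .
      show "C ! k \<in> Idl" using gG' G_Id by blast
      show "C ! k \<in> J" using gG' G_J by blast
      show "initial rk (C ! k) \<in> Rh" using init_Rh[OF ck(3)] .
      show "\<forall>x\<in>vars (initial rk (C ! k)) \<union> vars (rpart v e (C ! k)). VV x \<and> rk x v"
        using vCk vars_rpart[of v e "C ! k"] vars_initial[of rk "C ! k"] by blast
      show "\<exists>X\<in>Rh. H = initial rk (C ! k) * X" using H_factor(1)[OF ck(3)] .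
      fix r :: "'k dpoly" assume r: "bnd v (e - 1) r" "v \<in> vars r"
      show "v \<notin> bad r"
      proof
        assume "v \<in> bad r"
        then obtain k' where k': "k' < length C" "v = ld k'" "deg_in (ld k') (C ! k') \<le> deg_in v r"
          using False unfolding bad_def by blast
        have "k' = k" using ld_inj[OF k'(1) k(1)] k'(2) k(2) by simp
        moreover have "deg_in v r \<le> e - 1" using r(1) deg_in_le by blast
        ultimately show False using k'(3) k(2) e1 unfolding e_def by simp
      qed
    qed
  qed
qed

definition Vh :: "dvar set" where "Vh = {x. VV x \<and> var_ord x \<le> h}"
definition pos :: "dvar \<Rightarrow> nat" where "pos w = card {x\<in>Vh. rk_less rk x w}"

lemma pos_mono:
  assumes "w \<in> Vh" "v \<in> Vh" "rk_less rk w v"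
  shows "pos w < pos v"
  unfolding pos_def
proof (rule psubset_card_mono)
  show "finite {x \<in> Vh. rk_less rk x v}" using finite_Vh[of m l h] unfolding Vh_def
    by (rule finite_subset[rotated]) blast
  have "{x \<in> Vh. rk_less rk x w} \<subseteq> {x \<in> Vh. rk_less rk x v}"
    using assms rk_less_trans unfolding Vh_def by blast
  moreover have "w \<in> {x \<in> Vh. rk_less rk x v}" "w \<notin> {x \<in> Vh. rk_less rk x w}"
    using assms unfolding rk_less_def by auto
  ultimately show "{x \<in> Vh. rk_less rk x w} \<subset> {x \<in> Vh. rk_less rk x v}" by blast
qed

lemma bad_Vh: "f \<in> Rh \<Longrightarrow> bad f \<subseteq> Vh"
  using bad_sub Rh_VV unfolding Vh_def by blast

lemma red_main: "f \<in> Rh \<Longrightarrow> f \<in> J \<Longrightarrow> (\<forall>w\<in>bad f. pos w < n) \<Longrightarrow> \<exists>N. H ^ N * f \<in> Idl"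
proof (induction n arbitrary: f)
  have base: "\<exists>N. H ^ N * f \<in> Idl" if "f \<in> Rh" "f \<in> J" "bad f = {}" for f
  proof -
    have "f = 0" using Z[OF that(2) Rh_R[OF that(1)]] bad_empty[OF that(3)] by blast
    then show ?thesis using ideal_zero[OF Idl_ideal] by auto
  qed
  {
    case 0
    then have "bad f = {}" by auto
    then show ?case using base 0 by blast
  next
    case (Suc n)
    show ?case
    proof (cases "bad f = {}")
      case True then show ?thesis using base Suc.prems by blast
    next
      case False
      have fin: "finite (bad f)" using finite_subset[OF bad_sub finite_vars] .
      obtain v where v: "v \<in> bad f" "\<forall>w\<in>bad f. rk w v"
        using exists_max[OF fin False] bad_Vh[OF Suc.prems(1)] unfolding Vh_def by blast
      obtain a X f1 where R: "f1 \<in> Rh" "f1 \<in> J" "X \<in> Rh" "\<forall>w\<in>bad f1. rk_less rk w v"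
          "H ^ a * f - X * f1 \<in> Idl"
        using RS[OF Suc.prems(1,2) v] by blast
      have "\<forall>w\<in>bad f1. pos w < n"
      proof
        fix w assume w: "w \<in> bad f1"
        have "pos w < pos v" using pos_mono R(4) w bad_Vh[OF R(1)] bad_Vh[OF Suc.prems(1)] v(1) by blast
        moreover have "pos v < Suc n" using Suc.prems(3) v(1) by blast
        ultimately show "pos w < n" by simp
      qed
      then obtain N where N: "H ^ N * f1 \<in> Idl" using Suc.IH[OF R(1,2)] by blast
      have "H ^ (N + a) * f = H ^ N * (H ^ a * f - X * f1) + X * (H ^ N * f1)"
        by (simp add: algebra_simps power_add)
      moreover have "H ^ N * (H ^ a * f - X * f1) \<in> Idl" using Idl_mult[OF R(5) Rh_power[OF H_Rh]] .
      moreover have "X * (H ^ N * f1) \<in> Idl" using Idl_mult[OF N R(3)] .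
      ultimately show ?thesis using Idl_add by metis
    qed
  }
qed


lemma part1: "J \<inter> Rh = truncated_ideal d m l rk h C"
proof
  show "J \<inter> Rh \<subseteq> truncated_ideal d m l rk h C"
  proof
    fix a assume a: "a \<in> J \<inter> Rh"
    have fin: "finite (pos ` bad a)" using finite_subset[OF bad_sub finite_vars] by blast
    have "\<forall>w\<in>bad a. pos w < Suc (Max (insert 0 (pos ` bad a)))"
      using fin by (auto simp: le_imp_less_Suc)
    then obtain N where "H ^ N * a \<in> Idl" using red_main a by blast
    then show "a \<in> truncated_ideal d m l rk h C" unfolding trunc_def' saturation_def using a by blast
  qed
  show "truncated_ideal d m l rk h C \<subseteq> J \<inter> Rh"
  proof
    fix a assume "a \<in> truncated_ideal d m l rk h C"
    then obtain n where a: "a \<in> Rh" "H ^ n * a \<in> Idl" unfolding trunc_def' saturation_def by blast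
    have KI: "is_ideal_in Rh (J \<inter> Rh)" unfolding is_ideal_in_def
    proof (intro conjI ballI)
      show "J \<inter> Rh \<subseteq> Rh" by blast
      show "0 \<in> J \<inter> Rh" using ideal_zero[OF J_ideal] Rh_zero by blast
      fix x assume x: "x \<in> J \<inter> Rh"
      {
        fix y assume y: "y \<in> J \<inter> Rh"
        show "x + y \<in> J \<inter> Rh" using ideal_add[OF J_ideal] Rh_add x y by blast
      }
      {
        fix r assume r: "r \<in> Rh"
        show "r * x \<in> J \<inter> Rh" using J_mult[of x r] Rh_R[OF r] Rh_mult[OF r] x by blast
      }
    qed
    have "Idl \<subseteq> J \<inter> Rh" using ideal_gen_least[OF KI] G_J G_Rh by blast
    then have "H ^ n * a \<in> J" using a by blast
    then obtain k where "H ^ k * (H ^ n * a) \<in> diff_ideal_gen d m l (set C)"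
      unfolding J_sat saturation_def by blast
    then have "H ^ (k + n) * a \<in> diff_ideal_gen d m l (set C)" by (simp add: power_add ac_simps)
    then have "a \<in> J" unfolding J_sat saturation_def using Rh_R[OF a(1)] by blast
    then show "a \<in> J \<inter> Rh" using a by blast
  qed
qed

lemma part2: "is_ideal_in Rh (truncated_ideal d m l rk h C)"
  unfolding trunc_def' is_ideal_in_def saturation_def
proof (intro conjI ballI)
  show "{a \<in> Rh. \<exists>n. H ^ n * a \<in> Idl} \<subseteq> Rh" by blast
  show "0 \<in> {a \<in> Rh. \<exists>n. H ^ n * a \<in> Idl}" using Rh_zero ideal_zero[OF Idl_ideal] by auto
  fix a assume "a \<in> {a \<in> Rh. \<exists>n. H ^ n * a \<in> Idl}"
  then obtain n where a: "a \<in> Rh" "H ^ n * a \<in> Idl" by blast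
  {
    fix b assume "b \<in> {a \<in> Rh. \<exists>n. H ^ n * a \<in> Idl}"
    then obtain k where b: "b \<in> Rh" "H ^ k * b \<in> Idl" by blast
    have "H ^ (n + k) * (a + b) = H ^ k * (H ^ n * a) + H ^ n * (H ^ k * b)"
      by (simp add: algebra_simps power_add)
    also have "\<dots> \<in> Idl" using Idl_add Idl_mult a b Rh_power[OF H_Rh] by blast
    finally show "a + b \<in> {a \<in> Rh. \<exists>n. H ^ n * a \<in> Idl}" using Rh_add a b by blast
  }
  {
    fix r assume r: "r \<in> Rh"
    have "H ^ n * (r * a) = r * (H ^ n * a)" by (simp add: ac_simps)
    also have "\<dots> \<in> Idl" using Idl_mult a r by blast
    finally show "r * a \<in> {a \<in> Rh. \<exists>n. H ^ n * a \<in> Idl}" using Rh_mult a r by blast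
  }
qed

end



theorem mainTheorem7:
  fixes d :: "nat \<Rightarrow> 'k::field_char_0 \<Rightarrow> 'k" and m l h :: nat
    and rk :: "dvar \<Rightarrow> dvar \<Rightarrow> bool" and C :: "'k dpoly list"
  assumes "diff_field d m"
    and "is_ranking m l rk" and "is_orderly m l rk"
    and "characterizable d m l rk (char_ideal d m l rk C)"
    and "kolchin_char_set m l rk (char_ideal d m l rk C) C"
    and "order_bound h C"
  shows "char_ideal d m l rk C \<inter> dring_h m l h = truncated_ideal d m l rk h C
       \<and> is_ideal_in (dring_h m l h) (truncated_ideal d m l rk h C)
       \<and> (\<forall>(I :: 'k dpoly set) (Cs :: nat \<Rightarrow> 'k dpoly list) n.
            is_diff_ideal d m l I \<and> is_radical_in (dring m l) I
            \<and> I = dring m l \<inter> (\<Inter>i<n. char_ideal d m l rk (Cs i))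
            \<and> (\<forall>i<n. characterizable d m l rk (char_ideal d m l rk (Cs i))
                     \<and> kolchin_char_set m l rk (char_ideal d m l rk (Cs i)) (Cs i)
                     \<and> order_bound h (Cs i))
            \<longrightarrow> I \<inter> dring_h m l h = dring_h m l h \<inter> (\<Inter>i<n. truncated_ideal d m l rk h (Cs i)))"
proof -
  have M: "MAIN m l rk d h C"
    by (unfold_locales) (use assms in auto)
  have P3: "I \<inter> dring_h m l h = dring_h m l h \<inter> (\<Inter>i<n. truncated_ideal d m l rk h (Cs i))"
    if A: "I = dring m l \<inter> (\<Inter>i<n. char_ideal d m l rk (Cs i))"
      "\<forall>i<n. characterizable d m l rk (char_ideal d m l rk (Cs i))
                     \<and> kolchin_char_set m l rk (char_ideal d m l rk (Cs i)) (Cs i)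
                     \<and> order_bound h (Cs i)"
    for I :: "'k dpoly set" and Cs n
  proof -
    have eq: "char_ideal d m l rk (Cs i) \<inter> dring_h m l h = truncated_ideal d m l rk h (Cs i)" if "i < n" for i
    proof -
      have "MAIN m l rk d h (Cs i)" by (unfold_locales) (use assms A(2) that in auto)
      then show ?thesis by (rule MAIN.part1)
    qed
    show ?thesis
    proof (rule set_eqI)
      fix x
      have "x \<in> I \<inter> dring_h m l h \<longleftrightarrow> x \<in> dring_h m l h \<and> (\<forall>i<n. x \<in> char_ideal d m l rk (Cs i) \<inter> dring_h m l h)"
        unfolding A(1) using dring_h_sub by auto
      also have "\<dots> \<longleftrightarrow> x \<in> dring_h m l h \<inter> (\<Inter>i<n. truncated_ideal d m l rk h (Cs i))"
        using eq by auto
      finally show "x \<in> I \<inter> dring_h m l h \<longleftrightarrow> x \<in> dring_h m l h \<inter> (\<Inter>i<n. truncated_ideal d m l rk h (Cs i))" .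
    qed
  qed
  show ?thesis
  proof (intro conjI allI impI)
    show "char_ideal d m l rk C \<inter> dring_h m l h = truncated_ideal d m l rk h C" by (rule MAIN.part1[OF M])
    show "is_ideal_in (dring_h m l h) (truncated_ideal d m l rk h C)" by (rule MAIN.part2[OF M])
    fix I :: "'k dpoly set" and Cs n
    assume H: "is_diff_ideal d m l I \<and> is_radical_in (dring m l) I
            \<and> I = dring m l \<inter> (\<Inter>i<n. char_ideal d m l rk (Cs i))
            \<and> (\<forall>i<n. characterizable d m l rk (char_ideal d m l rk (Cs i))
                     \<and> kolchin_char_set m l rk (char_ideal d m l rk (Cs i)) (Cs i)
                     \<and> order_bound h (Cs i))"
    then have H1: "I = dring m l \<inter> (\<Inter>i<n. char_ideal d m l rk (Cs i))"
      and H2: "\<forall>i<n. characterizable d m l rk (char_ideal d m l rk (Cs i))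
                     \<and> kolchin_char_set m l rk (char_ideal d m l rk (Cs i)) (Cs i)
                     \<and> order_bound h (Cs i)" by simp_all
    show "I \<inter> dring_h m l h = dring_h m l h \<inter> (\<Inter>i<n. truncated_ideal d m l rk h (Cs i))"
      by (rule P3[OF H1 H2])
  qed
qed


end
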